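(* Let $p\ge2$, $n\ge1$, $\alpha>1$ real, and $m\in\{j/p^n:0\le j\le p^n\}$ be fixed, and let $\mathcal{B}_m$ be the set of Boolean functions $f:(\mathbb{Z}/p\mathbb{Z})^n\to\{0,1\}$ with $\mathbb{E} f=m$. (i) There exists $\epsilon_0>0$ such that for every $\epsilon\in(0,\epsilon_0)$, every $f\in\mathcal{B}_m$ maximizing $\mathbb{E}(T_\epsilon f)^\alpha$ over $\mathcal{B}_m$ satisfies $I(f)=\min\{I(g):g\in\mathcal{B}_m\}$. (ii) There exists $\epsilon_1<1-1/p$ such that for every $\epsilon\in(\epsilon_1,1-1/p)$, every $f\in\mathcal{B}_m$ maximizing $\mathbb{E}(T_\epsilon f)^\alpha$ over $\mathcal{B}_m$ satisfies $W_1(f)=\max\{W_1(g):g\in\mathcal{B}_m\}$, where $W_1(f)=\sum_{\xi:\,|\mathrm{supp}(\xi)|=1}|\hat f(\xi)|^2$.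
   Context: $(\mathbb{Z}/p\mathbb{Z})^n$ carries the uniform measure; $X$ is a uniform random element. For $0\le\epsilon\le1-1/p$, the noise operator is $T_\epsilon f(x)=\mathbb{E} f(x+Z)$, where $Z$ has independent coordinates, each equal to $0$ with probability $1-\epsilon$ and to each nonzero element of $\mathbb{Z}/p\mathbb{Z}$ with probability $\epsilon/(p-1)$. Let $e_p(\theta)=e^{2\pi i\theta/p}$, $\hat f(\xi)=\mathbb{E}[f(X)\overline{e_p(\xi\cdot X)}]$, $\mathrm{supp}(\xi)=\{j:\xi_j\ne0\}$. For $j\in[n]$, let $\tilde Z_j$ be uniform on $(\mathbb{Z}/p\mathbb{Z})\setminus\{0\}$ independent of $X$, $\tilde\sigma_j(x)=(x_1,\dots,x_j+\tilde Z_j,\dots,x_n)$, $I_j(f)=\mathbb{P}(f(X)\ne f(\tilde\sigma_j(X)))$, and total influence $I(f)=\sum_jI_j(f)$. *)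

theory Defs
  imports Complex_Main
begin

text \<open>Points of (Z/pZ)^n are represented canonically as functions nat => nat
  with coordinates i < n in {0..<p} and all coordinates i >= n equal to 0.\<close>

definition cube :: "nat \<Rightarrow> nat \<Rightarrow> (nat \<Rightarrow> nat) set" where
  "cube p n = {x. (\<forall>i<n. x i < p) \<and> (\<forall>i. n \<le> i \<longrightarrow> x i = 0)}"

definition vadd :: "nat \<Rightarrow> nat \<Rightarrow> (nat \<Rightarrow> nat) \<Rightarrow> (nat \<Rightarrow> nat) \<Rightarrow> (nat \<Rightarrow> nat)" where
  "vadd p n x z = (\<lambda>i. if i < n then (x i + z i) mod p else 0)"

definition expect :: "nat \<Rightarrow> nat \<Rightarrow> ((nat \<Rightarrow> nat) \<Rightarrow> real) \<Rightarrow> real" where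
  "expect p n f = (\<Sum>x\<in>cube p n. f x) / real p ^ n"

definition noise_weight :: "nat \<Rightarrow> nat \<Rightarrow> real \<Rightarrow> (nat \<Rightarrow> nat) \<Rightarrow> real" where
  "noise_weight p n \<epsilon> z = (\<Prod>i<n. if z i = 0 then 1 - \<epsilon> else \<epsilon> / real (p - 1))"

definition noise_op :: "nat \<Rightarrow> nat \<Rightarrow> real \<Rightarrow> ((nat \<Rightarrow> nat) \<Rightarrow> real) \<Rightarrow> (nat \<Rightarrow> nat) \<Rightarrow> real" where
  "noise_op p n \<epsilon> f x = (\<Sum>z\<in>cube p n. noise_weight p n \<epsilon> z * f (vadd p n x z))"

definition boolfuns :: "nat \<Rightarrow> nat \<Rightarrow> real \<Rightarrow> ((nat \<Rightarrow> nat) \<Rightarrow> real) set" where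
  "boolfuns p n m = {f. (\<forall>x\<in>cube p n. f x \<in> {0, 1}) \<and> (\<forall>x. x \<notin> cube p n \<longrightarrow> f x = 0)
                        \<and> expect p n f = m}"

definition noise_moment :: "nat \<Rightarrow> nat \<Rightarrow> real \<Rightarrow> real \<Rightarrow> ((nat \<Rightarrow> nat) \<Rightarrow> real) \<Rightarrow> real" where
  "noise_moment p n \<alpha> \<epsilon> f = expect p n (\<lambda>x. noise_op p n \<epsilon> f x powr \<alpha>)"

text \<open>Influence I_j(f) = P(f(X) \<noteq> f(sigma_j X)), Z_j uniform on nonzero residues.\<close>
definition influence :: "nat \<Rightarrow> nat \<Rightarrow> nat \<Rightarrow> ((nat \<Rightarrow> nat) \<Rightarrow> real) \<Rightarrow> real" where
  "influence p n j f =
     (\<Sum>x\<in>cube p n. \<Sum>a\<in>{1..<p}.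
        (if f x \<noteq> f (x(j := (x j + a) mod p)) then 1 else 0)) / (real p ^ n * real (p - 1))"

definition total_influence :: "nat \<Rightarrow> nat \<Rightarrow> ((nat \<Rightarrow> nat) \<Rightarrow> real) \<Rightarrow> real" where
  "total_influence p n f = (\<Sum>j<n. influence p n j f)"

definition ep :: "nat \<Rightarrow> real \<Rightarrow> complex" where
  "ep p \<theta> = exp (2 * of_real pi * \<i> * of_real \<theta> / of_nat p)"

definition fourier :: "nat \<Rightarrow> nat \<Rightarrow> ((nat \<Rightarrow> nat) \<Rightarrow> real) \<Rightarrow> (nat \<Rightarrow> nat) \<Rightarrow> complex" where
  "fourier p n f \<xi> = (\<Sum>x\<in>cube p n. of_real (f x) * cnj (ep p (real (\<Sum>i<n. \<xi> i * x i))))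
                       / of_nat (p ^ n)"

definition supp_vec :: "nat \<Rightarrow> (nat \<Rightarrow> nat) \<Rightarrow> nat set" where
  "supp_vec n \<xi> = {j. j < n \<and> \<xi> j \<noteq> 0}"

definition W1 :: "nat \<Rightarrow> nat \<Rightarrow> ((nat \<Rightarrow> nat) \<Rightarrow> real) \<Rightarrow> real" where
  "W1 p n f = (\<Sum>\<xi>\<in>{\<xi>\<in>cube p n. card (supp_vec n \<xi>) = 1}. (cmod (fourier p n f \<xi>))\<^sup>2)"

end

theory Submission
  imports Defs
begin

lemma cube_0: "cube p 0 = {\<lambda>_. 0}"
  by (auto simp: cube_def)

lemma cube_Suc: "cube p (Suc n) = (\<lambda>xa. (fst xa)(n := snd xa)) ` (cube p n \<times> {..<p})"
proof
  show "(\<lambda>xa. (fst xa)(n := snd xa)) ` (cube p n \<times> {..<p}) \<subseteq> cube p (Suc n)"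
    by (auto simp: cube_def)
  show "cube p (Suc n) \<subseteq> (\<lambda>xa. (fst xa)(n := snd xa)) ` (cube p n \<times> {..<p})"
  proof
    fix y assume y: "y \<in> cube p (Suc n)"
    have "y = (\<lambda>xa. (fst xa)(n := snd xa)) (y(n:=0), y n)" by auto
    moreover have "(y(n:=0), y n) \<in> cube p n \<times> {..<p}" using y by (auto simp: cube_def)
    ultimately show "y \<in> (\<lambda>xa. (fst xa)(n := snd xa)) ` (cube p n \<times> {..<p})" by blast
  qed
qed

lemma inj_cube_Suc: "inj_on (\<lambda>xa. (fst xa)(n := snd xa)) (cube p n \<times> {..<p})"
proof (rule inj_onI)
  fix u v assume u: "u \<in> cube p n \<times> {..<p}" and v: "v \<in> cube p n \<times> {..<p}"
    and h: "(fst u)(n := snd u) = (fst v)(n := snd v)"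
  have "snd u = snd v" using fun_cong[OF h, of n] by simp
  moreover have "fst u = fst v"
  proof
    fix i show "fst u i = fst v i"
    proof (cases "i = n")
      case True then show ?thesis using u v by (auto simp: cube_def)
    next
      case False then show ?thesis using fun_cong[OF h, of i] by simp
    qed
  qed
  ultimately show "u = v" by (simp add: prod_eq_iff)
qed

lemma finite_cube: "finite (cube p n)"
  by (induction n) (auto simp: cube_0 cube_Suc)

lemma sum_prod_cube:
  fixes g :: "nat \<Rightarrow> nat \<Rightarrow> 'a::comm_semiring_1"
  shows "(\<Sum>x\<in>cube p n. \<Prod>i<n. g i (x i)) = (\<Prod>i<n. \<Sum>a<p. g i a)"
proof (induction n)
  case 0 show ?case by (simp add: cube_0)
next
  case (Suc n)
  have "(\<Sum>x\<in>cube p (Suc n). \<Prod>i<Suc n. g i (x i))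
      = (\<Sum>xa\<in>cube p n \<times> {..<p}. \<Prod>i<Suc n. g i (((fst xa)(n := snd xa)) i))"
    unfolding cube_Suc by (subst sum.reindex[OF inj_cube_Suc]) (simp add: o_def)
  also have "\<dots> = (\<Sum>xa\<in>cube p n \<times> {..<p}. (\<Prod>i<n. g i (fst xa i)) * g n (snd xa))"
    by (intro sum.cong refl) (simp add: prod.lessThan_Suc)
  also have "\<dots> = (\<Sum>x\<in>cube p n. \<Sum>a<p. (\<Prod>i<n. g i (x i)) * g n a)"
    unfolding sum.cartesian_product by (rule sum.cong) auto
  also have "\<dots> = (\<Sum>x\<in>cube p n. (\<Prod>i<n. g i (x i))) * (\<Sum>a<p. g n a)"
    by (rule sum_product[symmetric])
  also have "\<dots> = (\<Prod>i<Suc n. \<Sum>a<p. g i a)"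
    using Suc by (simp add: prod.lessThan_Suc)
  finally show ?case .
qed

lemma card_cube: "card (cube p n) = p ^ n"
proof -
  have "real (card (cube p n)) = (\<Sum>x\<in>cube p n. \<Prod>i<n. (\<lambda>i a. 1::real) i (x i))" by simp
  also have "\<dots> = real p ^ n" by (subst sum_prod_cube) simp
  finally show ?thesis by (metis of_nat_eq_iff of_nat_power)
qed

definition chi :: "nat \<Rightarrow> nat \<Rightarrow> (nat \<Rightarrow> nat) \<Rightarrow> (nat \<Rightarrow> nat) \<Rightarrow> complex" where
  "chi p n \<xi> x = ep p (real (\<Sum>i<n. \<xi> i * x i))"

definition om :: "nat \<Rightarrow> complex" where "om p = cis (2 * pi / real p)"

lemma ep_nat: "ep p (real k) = om p ^ k"
proof -
  have "om p ^ k = cis (real k * (2 * pi / real p))" unfolding om_def by (rule DeMoivre)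
  also have "\<dots> = exp (\<i> * complex_of_real (real k * (2 * pi / real p)))" by (rule cis_conv_exp)
  also have "\<dots> = ep p (real k)" unfolding ep_def by (simp add: field_simps)
  finally show ?thesis by simp
qed

lemma om_pow_p: "p > 0 \<Longrightarrow> om p ^ p = 1"
proof -
  assume "p > 0"
  have "om p ^ p = cis (real p * (2 * pi / real p))" unfolding om_def by (rule DeMoivre)
  also have "\<dots> = 1" using \<open>p > 0\<close> by simp
  finally show ?thesis .
qed

lemma om_pow_mod: "p > 0 \<Longrightarrow> om p ^ k = om p ^ (k mod p)"
proof -
  assume p: "p > 0"
  have "om p ^ k = om p ^ (p * (k div p) + k mod p)" by simp
  also have "\<dots> = (om p ^ p) ^ (k div p) * om p ^ (k mod p)" by (simp only: power_add power_mult)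
  also have "\<dots> = om p ^ (k mod p)" using om_pow_p[OF p] by simp
  finally show ?thesis .
qed

lemma om_pow_eq_1: assumes p: "p > 0" shows "om p ^ k = 1 \<longleftrightarrow> p dvd k"
proof
  assume "p dvd k" then obtain q where "k = p * q" by auto
  moreover have "om p ^ (p * q) = 1" by (simp only: power_mult om_pow_p[OF p] power_one)
  ultimately show "om p ^ k = 1" by simp
next
  assume h: "om p ^ k = 1"
  have "om p ^ k = cis (real k * (2 * pi / real p))" unfolding om_def by (rule DeMoivre)
  with h have "cos (real k * (2 * pi / real p)) = 1"
    by (metis complex.sel(1) cis.sel(1) one_complex.sel(1))
  then obtain m :: int where m: "real k * (2 * pi / real p) = real_of_int m * 2 * pi"
    using cos_one_2pi_int by blast
  have "real k = real_of_int m * real p" using m p by (simp add: field_simps)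
  then have "int k = m * int p" by (metis of_int_eq_iff of_int_mult of_int_of_nat_eq)
  then have "int p dvd int k" by simp
  then show "p dvd k" by simp
qed

lemma sum_om: assumes p: "p > 0"
  shows "(\<Sum>a<p. (om p ^ k) ^ a) = (if p dvd k then of_nat p else 0)"
proof (cases "p dvd k")
  case True
  have "om p ^ k = 1" using True om_pow_eq_1[OF p] by simp
  then show ?thesis using True by simp
next
  case False
  then have ne: "om p ^ k \<noteq> 1" using om_pow_eq_1[OF p] by simp
  have "(om p ^ k) ^ p = (om p ^ p) ^ k" by (metis power_mult mult.commute)
  then have "(om p ^ k) ^ p = 1" using om_pow_p[OF p] by simp
  then show ?thesis using False geometric_sum[OF ne, of p] by simp
qed

lemma cnj_om: assumes p: "p > 0" shows "cnj (om p) = om p ^ (p - 1)"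
proof -
  have "om p ^ (p - 1) * om p = 1" using om_pow_p[OF p] p
    by (metis Suc_diff_1 power_Suc2)
  then have "om p ^ (p - 1) = inverse (om p)" using inverse_unique[of "om p" "om p ^ (p - 1)"] by (simp add: mult.commute)
  then show ?thesis unfolding om_def by (simp add: cis_cnj)
qed

lemma chi_prod: "chi p n \<xi> x = (\<Prod>i<n. om p ^ (\<xi> i * x i))"
  unfolding chi_def ep_nat by (rule power_sum)

lemma cnj_chi: "p > 0 \<Longrightarrow> cnj (chi p n \<xi> x) = (\<Prod>i<n. om p ^ ((p - 1) * (\<xi> i * x i)))"
  unfolding chi_prod by (simp add: cnj_om power_mult)

lemma chi_sym: "chi p n \<xi> x = chi p n x \<xi>"
  unfolding chi_def by (simp add: mult.commute)

lemma dvd_iff_eq_lt: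
  fixes a b p :: nat
  assumes "a < p" "b < p"
  shows "p dvd (a + (p - 1) * b) \<longleftrightarrow> a = b"
proof
  assume "a = b"
  have p0: "p > 0" using assms by simp
  have "p * b = b + (p - 1) * b" using p0 by (metis Suc_diff_1 mult_Suc)
  then have "a + (p - 1) * b = p * b" using \<open>a = b\<close> by simp
  then show "p dvd (a + (p - 1) * b)" by simp
next
  assume d: "p dvd (a + (p - 1) * b)"
  have pp: "p \<ge> 1" using assms by simp
  obtain q where q: "p = Suc q" using pp by (cases p) auto
  have "int (a + (p - 1) * b) = (int a - int b) + int p * int b"
    unfolding q by (simp add: algebra_simps)
  with d have "int p dvd (int a - int b) + int p * int b"
    by (metis int_dvd_int_iff)
  then have h1: "int p dvd (int a - int b)" by (simp add: dvd_add_left_iff)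
  have h2: "\<bar>int a - int b\<bar> < int p" using assms by auto
  show "a = b"
  proof (rule ccontr)
    assume "a \<noteq> b"
    then have "int a - int b \<noteq> 0" by simp
    from dvd_imp_le_int[OF this h1] h2 show False by simp
  qed
qed

lemma prod_if_const:
  "(\<Prod>i<n. if P i then (c::'a::comm_semiring_1) else 0) = (if \<forall>i<n. P i then c ^ n else 0)"
  by (induction n) (auto simp: less_Suc_eq mult.commute)

lemma cube_eq_iff: "\<xi> \<in> cube p n \<Longrightarrow> \<eta> \<in> cube p n \<Longrightarrow> (\<forall>i<n. \<xi> i = \<eta> i) \<longleftrightarrow> \<xi> = \<eta>"
proof
  assume c: "\<xi> \<in> cube p n" "\<eta> \<in> cube p n" and h: "\<forall>i<n. \<xi> i = \<eta> i"
  show "\<xi> = \<eta>"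
  proof
    fix i show "\<xi> i = \<eta> i" using c h by (cases "i < n") (auto simp: cube_def)
  qed
qed simp

lemma om_fac: "om p ^ (a * c) * om p ^ (d * (b * c)) = (om p ^ (a + d * b)) ^ c"
proof -
  have "a * c + d * (b * c) = (a + d * b) * c" by (simp add: algebra_simps)
  have "om p ^ (a * c) * om p ^ (d * (b * c)) = om p ^ (a * c + d * (b * c))" by (simp only: power_add)
  also have "\<dots> = om p ^ ((a + d * b) * c)" by (simp only: \<open>a * c + d * (b * c) = (a + d * b) * c\<close>)
  also have "\<dots> = (om p ^ (a + d * b)) ^ c" by (simp only: power_mult)
  finally show ?thesis .
qed

lemma orth:
  assumes p: "p > 0" and "\<xi> \<in> cube p n" "\<eta> \<in> cube p n"
  shows "(\<Sum>x\<in>cube p n. chi p n \<xi> x * cnj (chi p n \<eta> x)) = (if \<xi> = \<eta> then of_nat p ^ n else 0)"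
proof -
  have "(\<Sum>x\<in>cube p n. chi p n \<xi> x * cnj (chi p n \<eta> x))
      = (\<Sum>x\<in>cube p n. \<Prod>i<n. (om p ^ (\<xi> i + (p - 1) * \<eta> i)) ^ (x i))"
    unfolding cnj_chi[OF p] unfolding chi_prod prod.distrib[symmetric]
    by (intro sum.cong prod.cong refl) (rule om_fac)
  also have "\<dots> = (\<Prod>i<n. \<Sum>a<p. (om p ^ (\<xi> i + (p - 1) * \<eta> i)) ^ a)"
    by (rule sum_prod_cube)
  also have "\<dots> = (\<Prod>i<n. if \<xi> i = \<eta> i then of_nat p else 0)"
  proof (intro prod.cong refl)
    fix i assume "i \<in> {..<n}"
    then have "\<xi> i < p" "\<eta> i < p" using assms(2,3) by (auto simp: cube_def)
    then show "(\<Sum>a<p. (om p ^ (\<xi> i + (p - 1) * \<eta> i)) ^ a) = (if \<xi> i = \<eta> i then of_nat p else 0)"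
      by (simp only: sum_om[OF p] dvd_iff_eq_lt)
  qed
  also have "\<dots> = (if \<xi> = \<eta> then of_nat p ^ n else 0)"
    by (simp add: prod_if_const cube_eq_iff[OF assms(2,3)])
  finally show ?thesis .
qed

lemma fourier_chi: "fourier p n f \<xi> = (\<Sum>y\<in>cube p n. of_real (f y) * cnj (chi p n \<xi> y)) / of_nat (p ^ n)"
  unfolding fourier_def chi_def by simp

lemma inversion:
  assumes p: "p > 0" and x: "x \<in> cube p n"
  shows "complex_of_real (f x) = (\<Sum>\<xi>\<in>cube p n. fourier p n f \<xi> * chi p n \<xi> x)"
proof -
  have "(\<Sum>\<xi>\<in>cube p n. fourier p n f \<xi> * chi p n \<xi> x)
      = (\<Sum>\<xi>\<in>cube p n. (\<Sum>y\<in>cube p n. of_real (f y) * (chi p n \<xi> x * cnj (chi p n \<xi> y))) / of_nat (p ^ n))"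
    using p by (intro sum.cong refl) (simp add: fourier_chi sum_distrib_left mult_ac)
  also have "\<dots> = (\<Sum>\<xi>\<in>cube p n. \<Sum>y\<in>cube p n. of_real (f y) * (chi p n \<xi> x * cnj (chi p n \<xi> y))) / of_nat (p ^ n)"
    by (rule sum_divide_distrib[symmetric])
  also have "\<dots> = (\<Sum>y\<in>cube p n. \<Sum>\<xi>\<in>cube p n. of_real (f y) * (chi p n x \<xi> * cnj (chi p n y \<xi>))) / of_nat (p ^ n)"
    by (subst sum.swap) (simp add: chi_sym)
  also have "\<dots> = (\<Sum>y\<in>cube p n. of_real (f y) * (\<Sum>\<xi>\<in>cube p n. chi p n x \<xi> * cnj (chi p n y \<xi>))) / of_nat (p ^ n)"
    by (simp add: sum_distrib_left)
  also have "\<dots> = (\<Sum>y\<in>cube p n. of_real (f y) * (if x = y then of_nat p ^ n else 0)) / of_nat (p ^ n)"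
    by (intro arg_cong2[where f="(/)"] sum.cong refl) (simp add: orth[OF p x])
  also have "\<dots> = (\<Sum>y\<in>cube p n. if x = y then of_real (f x) * of_nat p ^ n else 0) / of_nat (p ^ n)"
    by (intro arg_cong2[where f="(/)"] sum.cong refl) auto
  also have "\<dots> = of_real (f x)"
    using x p finite_cube[of p n] by (simp add: sum.delta)
  finally show ?thesis by simp
qed

definition wi :: "nat \<Rightarrow> real \<Rightarrow> nat \<Rightarrow> real" where
  "wi p \<epsilon> a = (if a = 0 then 1 - \<epsilon> else \<epsilon> / real (p - 1))"

lemma noise_weight_prod: "noise_weight p n \<epsilon> z = (\<Prod>i<n. wi p \<epsilon> (z i))"
  by (simp add: noise_weight_def wi_def)

lemma vadd_cube: "p > 0 \<Longrightarrow> vadd p n x z \<in> cube p n"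
  by (auto simp: vadd_def cube_def)

lemma zero_cube: "p > 0 \<Longrightarrow> (\<lambda>_. 0) \<in> cube p n"
  by (auto simp: cube_def)

lemma vadd_zero: "x \<in> cube p n \<Longrightarrow> vadd p n x (\<lambda>_. 0) = x"
  by (auto simp: vadd_def cube_def)

lemma sum_wi: assumes "p \<ge> 2" shows "(\<Sum>a<p. wi p \<epsilon> a) = 1"
proof -
  obtain q where q: "p = Suc q" "q \<ge> 1" using assms by (cases p) auto
  have "(\<Sum>a<p. wi p \<epsilon> a) = wi p \<epsilon> 0 + (\<Sum>a<q. wi p \<epsilon> (Suc a))"
    unfolding q(1) by (rule sum.lessThan_Suc_shift)
  also have "\<dots> = 1 - \<epsilon> + real q * (\<epsilon> / real q)" by (simp add: wi_def q(1))
  also have "\<dots> = 1" using q(2) by simp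
  finally show ?thesis .
qed

lemma sum_weight: "p \<ge> 2 \<Longrightarrow> (\<Sum>z\<in>cube p n. noise_weight p n \<epsilon> z) = 1"
  unfolding noise_weight_prod using sum_prod_cube[where g="\<lambda>i a. wi p \<epsilon> a" and p=p and n=n] by (simp add: sum_wi)

lemma wi_nonneg: "0 \<le> \<epsilon> \<Longrightarrow> \<epsilon> \<le> 1 \<Longrightarrow> 0 \<le> wi p \<epsilon> a"
  by (simp add: wi_def)

lemma weight_nonneg: "0 \<le> \<epsilon> \<Longrightarrow> \<epsilon> \<le> 1 \<Longrightarrow> 0 \<le> noise_weight p n \<epsilon> z"
  unfolding noise_weight_prod by (intro prod_nonneg) (simp add: wi_nonneg)

lemma weight_zero: "noise_weight p n \<epsilon> (\<lambda>_. 0) = (1 - \<epsilon>) ^ n"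
  by (simp add: noise_weight_def)

lemma chi_vadd: assumes p: "p > 0"
  shows "chi p n \<xi> (vadd p n x z) = chi p n \<xi> x * chi p n \<xi> z"
proof -
  have "om p ^ (\<xi> i * ((x i + z i) mod p)) = om p ^ (\<xi> i * x i) * om p ^ (\<xi> i * z i)" for i
  proof -
    have "om p ^ (\<xi> i * ((x i + z i) mod p)) = om p ^ (\<xi> i * ((x i + z i) mod p) mod p)"
      by (rule om_pow_mod[OF p])
    also have "\<dots> = om p ^ (\<xi> i * (x i + z i) mod p)" by (simp add: mod_mult_right_eq)
    also have "\<dots> = om p ^ (\<xi> i * (x i + z i))" by (rule om_pow_mod[OF p, symmetric])
    also have "\<dots> = om p ^ (\<xi> i * x i) * om p ^ (\<xi> i * z i)" by (simp add: algebra_simps power_add)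
    finally show ?thesis .
  qed
  then show ?thesis unfolding chi_prod vadd_def prod.distrib[symmetric]
    by (intro prod.cong refl) simp
qed

lemma prod_supp: "(\<Prod>i<n. if \<xi> i = 0 then 1 else (c::'a::comm_monoid_mult)) = c ^ card (supp_vec n \<xi>)"
proof -
  have s: "supp_vec n \<xi> = {i\<in>{..<n}. \<xi> i \<noteq> 0}" by (auto simp: supp_vec_def)
  have "c ^ card (supp_vec n \<xi>) = (\<Prod>i\<in>supp_vec n \<xi>. c)" by simp
  also have "\<dots> = (\<Prod>i<n. if \<xi> i \<noteq> 0 then c else 1)" unfolding s by (rule prod.inter_filter) simp
  also have "\<dots> = (\<Prod>i<n. if \<xi> i = 0 then 1 else c)" by (intro prod.cong refl) simp
  finally show ?thesis by simp
qed

definition rho :: "nat \<Rightarrow> real \<Rightarrow> real" where "rho p \<epsilon> = 1 - \<epsilon> * real p / real (p - 1)"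

lemma wi_split: assumes "p \<ge> 2"
  shows "wi p \<epsilon> a = \<epsilon> / real (p - 1) + (if a = 0 then rho p \<epsilon> else 0)"
proof -
  obtain q where q: "p = Suc q" "q \<ge> 1" using assms by (cases p) auto
  show ?thesis unfolding wi_def rho_def q(1) using q(2) by (simp add: field_simps)
qed

lemma wsum_coord:
  assumes p: "p \<ge> 2" and b: "b < p"
  shows "(\<Sum>a<p. complex_of_real (wi p \<epsilon> a) * (om p ^ b) ^ a) = (if b = 0 then 1 else of_real (rho p \<epsilon>))"
proof -
  have p0: "p > 0" using p by simp
  have "(\<Sum>a<p. complex_of_real (wi p \<epsilon> a) * (om p ^ b) ^ a)
      = (\<Sum>a<p. of_real (\<epsilon> / real (p - 1)) * (om p ^ b) ^ a + (if a = 0 then of_real (rho p \<epsilon>) else 0))"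
    by (intro sum.cong refl) (simp add: wi_split[OF p] distrib_right)
  also have "\<dots> = of_real (\<epsilon> / real (p - 1)) * (\<Sum>a<p. (om p ^ b) ^ a) + of_real (rho p \<epsilon>)"
    using p0 by (simp add: sum.distrib sum_distrib_left)
  also have "\<dots> = (if b = 0 then 1 else of_real (rho p \<epsilon>))"
  proof (cases "b = 0")
    case True
    obtain q where q: "p = Suc q" "q \<ge> 1" using p by (cases p) auto
    have "\<epsilon> / real (p - 1) * real p + rho p \<epsilon> = 1" unfolding rho_def q(1) using q(2) by (simp add: field_simps)
    then have "complex_of_real (\<epsilon> / real (p - 1) * real p + rho p \<epsilon>) = 1" by simp
    then show ?thesis using True p0 by (simp add: sum_om)
  next
    case False
    then have "\<not> p dvd b" using b by (auto dest: dvd_imp_le)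
    then show ?thesis using False p0 by (simp add: sum_om)
  qed
  finally show ?thesis .
qed

lemma wsum_chi:
  assumes p: "p \<ge> 2" and xi: "\<xi> \<in> cube p n"
  shows "(\<Sum>z\<in>cube p n. complex_of_real (noise_weight p n \<epsilon> z) * chi p n \<xi> z)
       = of_real (rho p \<epsilon> ^ card (supp_vec n \<xi>))"
proof -
  have "(\<Sum>z\<in>cube p n. complex_of_real (noise_weight p n \<epsilon> z) * chi p n \<xi> z)
      = (\<Sum>z\<in>cube p n. \<Prod>i<n. complex_of_real (wi p \<epsilon> (z i)) * (om p ^ \<xi> i) ^ (z i))"
    unfolding noise_weight_prod chi_prod of_real_prod prod.distrib[symmetric]
    by (intro sum.cong prod.cong refl) (simp add: power_mult)
  also have "\<dots> = (\<Prod>i<n. \<Sum>a<p. complex_of_real (wi p \<epsilon> a) * (om p ^ \<xi> i) ^ a)"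
    by (rule sum_prod_cube)
  also have "\<dots> = (\<Prod>i<n. if \<xi> i = 0 then 1 else of_real (rho p \<epsilon>))"
    using xi by (intro prod.cong refl) (simp add: wsum_coord[OF p] cube_def)
  also have "\<dots> = of_real (rho p \<epsilon>) ^ card (supp_vec n \<xi>)" by (rule prod_supp)
  finally show ?thesis by simp
qed

lemma eigen:
  assumes p: "p \<ge> 2"
  shows "complex_of_real (noise_op p n \<epsilon> f x)
       = (\<Sum>\<xi>\<in>cube p n. of_real (rho p \<epsilon> ^ card (supp_vec n \<xi>)) * fourier p n f \<xi> * chi p n \<xi> x)"
proof -
  have p0: "p > 0" using p by simp
  have "complex_of_real (noise_op p n \<epsilon> f x)
      = (\<Sum>z\<in>cube p n. of_real (noise_weight p n \<epsilon> z) * of_real (f (vadd p n x z)))"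
    unfolding noise_op_def by simp
  also have "\<dots> = (\<Sum>z\<in>cube p n. \<Sum>\<xi>\<in>cube p n. fourier p n f \<xi> * chi p n \<xi> x * (of_real (noise_weight p n \<epsilon> z) * chi p n \<xi> z))"
    by (intro sum.cong refl)
       (simp add: inversion[OF p0 vadd_cube[OF p0]] chi_vadd[OF p0] sum_distrib_left mult_ac)
  also have "\<dots> = (\<Sum>\<xi>\<in>cube p n. fourier p n f \<xi> * chi p n \<xi> x * (\<Sum>z\<in>cube p n. of_real (noise_weight p n \<epsilon> z) * chi p n \<xi> z))"
    by (subst sum.swap) (simp add: sum_distrib_left)
  also have "\<dots> = (\<Sum>\<xi>\<in>cube p n. of_real (rho p \<epsilon> ^ card (supp_vec n \<xi>)) * fourier p n f \<xi> * chi p n \<xi> x)"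
  proof (intro sum.cong refl)
    fix \<xi> assume xi: "\<xi> \<in> cube p n"
    show "fourier p n f \<xi> * chi p n \<xi> x * (\<Sum>z\<in>cube p n. of_real (noise_weight p n \<epsilon> z) * chi p n \<xi> z)
        = of_real (rho p \<epsilon> ^ card (supp_vec n \<xi>)) * fourier p n f \<xi> * chi p n \<xi> x"
      unfolding wsum_chi[OF p xi] by (simp add: mult_ac)
  qed
  finally show ?thesis .
qed

lemma powr_bounds:
  fixes u \<alpha> :: real
  assumes u: "0 \<le> u" "u < 1" and a: "\<alpha> > 1"
  shows "\<alpha> * u * (1 - u) powr (\<alpha> - 1) \<le> 1 - (1 - u) powr \<alpha> \<and> 1 - (1 - u) powr \<alpha> \<le> \<alpha> * u"
proof (cases "u = 0")
  case True then show ?thesis by simp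
next
  case False
  then have ab: "1 - u < 1" using u by simp
  have der: "DERIV (\<lambda>t. t powr \<alpha>) t :> \<alpha> * t powr (\<alpha> - 1)" if "1 - u \<le> t" "t \<le> 1" for t
    using that u by (intro has_real_derivative_powr) simp
  obtain t where t: "1 - u < t" "t < 1" "1 powr \<alpha> - (1 - u) powr \<alpha> = (1 - (1 - u)) * (\<alpha> * t powr (\<alpha> - 1))"
    using MVT2[OF ab der] by blast
  have eq: "1 - (1 - u) powr \<alpha> = \<alpha> * u * t powr (\<alpha> - 1)" using t(3) by simp
  have t0: "t > 0" using t u by simp
  have "(1 - u) powr (\<alpha> - 1) \<le> t powr (\<alpha> - 1)" using t u a by (intro powr_mono2) auto
  moreover have "t powr (\<alpha> - 1) \<le> 1" using t t0 a by (intro powr_le1) auto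
  moreover have "\<alpha> * u \<ge> 0" using u a by simp
  ultimately show ?thesis unfolding eq
    using mult_left_mono[of "t powr (\<alpha> - 1)" 1 "\<alpha> * u"] mult_left_mono[of "(1 - u) powr (\<alpha> - 1)" "t powr (\<alpha> - 1)" "\<alpha> * u"]
    by simp
qed

definition boolf :: "nat \<Rightarrow> nat \<Rightarrow> ((nat \<Rightarrow> nat) \<Rightarrow> real) \<Rightarrow> bool" where
  "boolf p n f \<longleftrightarrow> (\<forall>x\<in>cube p n. f x \<in> {0, 1})"

lemma Tf_split:
  assumes p: "p \<ge> 2" and x: "x \<in> cube p n"
  shows "noise_op p n \<epsilon> f x = (1 - \<epsilon>) ^ n * f x + (\<Sum>z\<in>cube p n - {\<lambda>_. 0}. noise_weight p n \<epsilon> z * f (vadd p n x z))"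
proof -
  have z: "(\<lambda>_. 0) \<in> cube p n" using p by (simp add: zero_cube)
  show ?thesis unfolding noise_op_def
    using sum.remove[OF finite_cube z, of "\<lambda>z. noise_weight p n \<epsilon> z * f (vadd p n x z)"]
    by (simp add: weight_zero vadd_zero[OF x])
qed

lemma weight_nz: assumes p: "p \<ge> 2"
  shows "(\<Sum>z\<in>cube p n - {\<lambda>_. 0}. noise_weight p n \<epsilon> z) = 1 - (1 - \<epsilon>) ^ n"
proof -
  have z: "(\<lambda>_. 0) \<in> cube p n" using p by (simp add: zero_cube)
  show ?thesis using sum.remove[OF finite_cube z, of "noise_weight p n \<epsilon>"] sum_weight[OF p, of n \<epsilon>]
    by (simp add: weight_zero)
qed

lemma Tf_bounds:
  assumes p: "p \<ge> 2" and x: "x \<in> cube p n" and b: "boolf p n f" and e: "0 \<le> \<epsilon>" "\<epsilon> \<le> 1"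
  shows "(1 - \<epsilon>) ^ n * f x \<le> noise_op p n \<epsilon> f x"
    and "noise_op p n \<epsilon> f x \<le> (1 - \<epsilon>) ^ n * f x + (1 - (1 - \<epsilon>) ^ n)"
proof -
  have p0: "p > 0" using p by simp
  have fv: "0 \<le> f (vadd p n x z) \<and> f (vadd p n x z) \<le> 1" for z
  proof -
    have "vadd p n x z \<in> cube p n" by (rule vadd_cube[OF p0])
    then have "f (vadd p n x z) \<in> {0, 1}" using b unfolding boolf_def by blast
    then show ?thesis by auto
  qed
  have "0 \<le> (\<Sum>z\<in>cube p n - {\<lambda>_. 0}. noise_weight p n \<epsilon> z * f (vadd p n x z))"
    using fv e by (intro sum_nonneg mult_nonneg_nonneg weight_nonneg) auto
  then show "(1 - \<epsilon>) ^ n * f x \<le> noise_op p n \<epsilon> f x" unfolding Tf_split[OF p x] by simp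
  have "(\<Sum>z\<in>cube p n - {\<lambda>_. 0}. noise_weight p n \<epsilon> z * f (vadd p n x z))
      \<le> (\<Sum>z\<in>cube p n - {\<lambda>_. 0}. noise_weight p n \<epsilon> z)"
    using fv e by (intro sum_mono mult_right_le_one_le weight_nonneg) auto
  then show "noise_op p n \<epsilon> f x \<le> (1 - \<epsilon>) ^ n * f x + (1 - (1 - \<epsilon>) ^ n)"
    unfolding Tf_split[OF p x] weight_nz[OF p] by simp
qed

lemma one_minus_pow: assumes "0 \<le> \<epsilon>" "\<epsilon> \<le> 1" shows "1 - (1 - \<epsilon>) ^ n \<le> real n * \<epsilon>"
  using Bernoulli_inequality[of "- \<epsilon>" n] assms by simp

lemma pow_le1: assumes "0 \<le> \<epsilon>" "\<epsilon> \<le> 1" shows "(1 - \<epsilon>) ^ n \<le> (1::real)" "0 \<le> (1 - \<epsilon>) ^ n"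
  using assms by (auto intro: power_le_one)

lemma supp_sub: "supp_vec n z \<subseteq> {..<n}" by (auto simp: supp_vec_def)
lemma finite_supp: "finite (supp_vec n z)" using supp_sub finite_subset by blast

lemma weight_card:
  "noise_weight p n \<epsilon> z = (1 - \<epsilon>) ^ (n - card (supp_vec n z)) * (\<epsilon> / real (p - 1)) ^ card (supp_vec n z)"
proof -
  let ?A = "{..<n} \<inter> {i. z i = 0}" and ?S = "{..<n} \<inter> - {i. z i = 0}"
  have S: "?S = supp_vec n z" by (auto simp: supp_vec_def)
  have "card ?A + card ?S = n"
    using card_Un_disjoint[of ?A ?S] by (subgoal_tac "?A \<union> ?S = {..<n}") auto
  then have cA: "card ?A = n - card (supp_vec n z)" using S by simp
  show ?thesis unfolding noise_weight_def
    by (subst prod.If_cases) (simp_all add: cA S[symmetric])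
qed

lemma supp_pos: assumes z: "z \<in> cube p n" "z \<noteq> (\<lambda>_. 0)" shows "card (supp_vec n z) \<ge> 1"
proof -
  obtain i where i: "z i \<noteq> 0" using z(2) by auto
  have "i < n"
  proof (rule ccontr)
    assume "\<not> i < n" then have "z i = 0" using z(1) by (auto simp: cube_def)
    with i show False by simp
  qed
  then have "i \<in> supp_vec n z" using i by (simp add: supp_vec_def)
  then have "supp_vec n z \<noteq> {}" by auto
  then show ?thesis using finite_supp[of n z] by (simp add: Suc_le_eq card_gt_0_iff)
qed

lemma ev_pos: "eventually (\<lambda>\<epsilon>::real. 0 < \<epsilon>) (at_right 0)"
  by (simp add: eventually_at_right_less)

lemma ev_small: assumes "(c::real) > 0" shows "eventually (\<lambda>\<epsilon>. 0 < \<epsilon> \<and> \<epsilon> < c) (at_right 0)"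
proof -
  have "eventually (\<lambda>x. x \<in> {0<..<c}) (at_right 0)" by (rule eventually_at_right_real) fact
  then show ?thesis by (rule eventually_mono) simp
qed

lemma lim_wz:
  assumes p: "p \<ge> 2" and z: "z \<in> cube p n" "z \<noteq> (\<lambda>_. 0)"
  shows "((\<lambda>\<epsilon>. noise_weight p n \<epsilon> z / \<epsilon>) \<longlongrightarrow> (if card (supp_vec n z) = 1 then 1 / real (p - 1) else 0)) (at_right 0)"
proof -
  define k where "k = card (supp_vec n z)"
  obtain j where j: "k = Suc j" using supp_pos[OF z] unfolding k_def by (cases "card (supp_vec n z)") auto
  have ne: "real (p - 1) ^ k \<noteq> 0" using p by simp
  have lim: "((\<lambda>\<epsilon>::real. (1 - \<epsilon>) ^ (n - k) * \<epsilon> ^ j / real (p - 1) ^ k) \<longlongrightarrow> (1 - 0) ^ (n - k) * 0 ^ j / real (p - 1) ^ k) (at_right 0)"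
    by (intro tendsto_intros ne)
  have val: "(1 - 0) ^ (n - k) * 0 ^ j / real (p - 1) ^ k = (if k = 1 then 1 / real (p - 1) else (0::real))"
    using j by (cases j) auto
  have wk: "noise_weight p n \<epsilon> z = (1 - \<epsilon>) ^ (n - k) * (\<epsilon> / real (p - 1)) ^ k" for \<epsilon>
    unfolding k_def by (rule weight_card)
  have "eventually (\<lambda>\<epsilon>. (1 - \<epsilon>) ^ (n - k) * \<epsilon> ^ j / real (p - 1) ^ k = noise_weight p n \<epsilon> z / \<epsilon>) (at_right 0)"
    using ev_pos
  proof (rule eventually_mono)
    fix \<epsilon> :: real assume e: "0 < \<epsilon>"
    have "(\<epsilon> / real (p - 1)) ^ k = \<epsilon> * \<epsilon> ^ j / real (p - 1) ^ k"
      unfolding j by (simp add: power_divide)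
    then show "(1 - \<epsilon>) ^ (n - k) * \<epsilon> ^ j / real (p - 1) ^ k = noise_weight p n \<epsilon> z / \<epsilon>"
      unfolding wk using e by simp
  qed
  from Lim_transform_eventually[OF lim[unfolded val] this] show ?thesis unfolding k_def .
qed

definition D0 :: "nat \<Rightarrow> nat \<Rightarrow> ((nat \<Rightarrow> nat) \<Rightarrow> real) \<Rightarrow> (nat \<Rightarrow> nat) \<Rightarrow> real" where
  "D0 p n f x = (\<Sum>z\<in>cube p n. (if card (supp_vec n z) = 1 then 1 / real (p - 1) else 0) * (1 - f (vadd p n x z)))"

lemma one_minus_Tf:
  assumes p: "p \<ge> 2"
  shows "1 - noise_op p n \<epsilon> f x = (\<Sum>z\<in>cube p n. noise_weight p n \<epsilon> z * (1 - f (vadd p n x z)))"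
  unfolding noise_op_def using sum_weight[OF p, of n \<epsilon>]
  by (simp add: right_diff_distrib sum_subtractf)

lemma lim_D:
  assumes p: "p \<ge> 2" and x: "x \<in> cube p n" and fx: "f x = 1"
  shows "((\<lambda>\<epsilon>. (1 - noise_op p n \<epsilon> f x) / \<epsilon>) \<longlongrightarrow> D0 p n f x) (at_right 0)"
proof -
  have eq: "(1 - noise_op p n \<epsilon> f x) / \<epsilon> = (\<Sum>z\<in>cube p n. noise_weight p n \<epsilon> z / \<epsilon> * (1 - f (vadd p n x z)))" for \<epsilon>
    unfolding one_minus_Tf[OF p] sum_divide_distrib by (intro sum.cong refl) simp
  have "((\<lambda>\<epsilon>. \<Sum>z\<in>cube p n. noise_weight p n \<epsilon> z / \<epsilon> * (1 - f (vadd p n x z))) \<longlongrightarrow> D0 p n f x) (at_right 0)"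
    unfolding D0_def
  proof (intro tendsto_sum)
    fix z assume z: "z \<in> cube p n"
    show "((\<lambda>\<epsilon>. noise_weight p n \<epsilon> z / \<epsilon> * (1 - f (vadd p n x z))) \<longlongrightarrow>
          (if card (supp_vec n z) = 1 then 1 / real (p - 1) else 0) * (1 - f (vadd p n x z))) (at_right 0)"
    proof (cases "z = (\<lambda>_. 0)")
      case True then show ?thesis using fx by (simp add: vadd_zero[OF x])
    next
      case False then show ?thesis by (intro tendsto_intros lim_wz p z)
    qed
  qed
  then show ?thesis unfolding eq .
qed

lemma lim_point1:
  assumes p: "p \<ge> 2" and x: "x \<in> cube p n" and b: "boolf p n f" and fx: "f x = 1" and a: "\<alpha> > 1"
  shows "((\<lambda>\<epsilon>. (f x - noise_op p n \<epsilon> f x powr \<alpha>) / \<epsilon>) \<longlongrightarrow> \<alpha> * D0 p n f x) (at_right 0)"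
proof -
  define u where "u \<epsilon> = 1 - noise_op p n \<epsilon> f x" for \<epsilon>
  have Du: "((\<lambda>\<epsilon>. u \<epsilon> / \<epsilon>) \<longlongrightarrow> D0 p n f x) (at_right 0)" unfolding u_def by (rule lim_D[where f=f, OF p x fx])
  have u0: "(u \<longlongrightarrow> 0) (at_right 0)"
  proof -
    have l: "((\<lambda>\<epsilon>. \<epsilon> * (u \<epsilon> / \<epsilon>)) \<longlongrightarrow> 0 * D0 p n f x) (at_right 0)"
      by (intro tendsto_intros Du)
    have "eventually (\<lambda>\<epsilon>. \<epsilon> * (u \<epsilon> / \<epsilon>) = u \<epsilon>) (at_right 0)" using ev_pos by (rule eventually_mono) simp
    from Lim_transform_eventually[OF l this] show ?thesis by simp
  qed
  have ev1: "eventually (\<lambda>\<epsilon>. u \<epsilon> < 1) (at_right 0)" using order_tendstoD(2)[OF u0, of 1] by simp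
  have ev2: "eventually (\<lambda>\<epsilon>::real. 0 < \<epsilon> \<and> \<epsilon> < 1) (at_right 0)" by (rule ev_small) simp
  have ineq: "eventually (\<lambda>\<epsilon>. \<alpha> * (u \<epsilon> / \<epsilon>) * (1 - u \<epsilon>) powr (\<alpha> - 1) \<le> (f x - noise_op p n \<epsilon> f x powr \<alpha>) / \<epsilon>
      \<and> (f x - noise_op p n \<epsilon> f x powr \<alpha>) / \<epsilon> \<le> \<alpha> * (u \<epsilon> / \<epsilon>)) (at_right 0)"
    using ev1 ev2
  proof eventually_elim
    case (elim \<epsilon>)
    have "noise_op p n \<epsilon> f x \<le> 1" using Tf_bounds(2)[OF p x b, of \<epsilon>] elim fx by simp
    then have u0: "0 \<le> u \<epsilon>" unfolding u_def by simp
    have T: "noise_op p n \<epsilon> f x = 1 - u \<epsilon>" unfolding u_def by simp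
    from powr_bounds[OF u0 elim(1) a]
    have pb: "\<alpha> * u \<epsilon> * (1 - u \<epsilon>) powr (\<alpha> - 1) \<le> 1 - (1 - u \<epsilon>) powr \<alpha>" "1 - (1 - u \<epsilon>) powr \<alpha> \<le> \<alpha> * u \<epsilon>"
      by auto
    have e: "0 < \<epsilon>" using elim by simp
    have "\<alpha> * u \<epsilon> * (1 - u \<epsilon>) powr (\<alpha> - 1) / \<epsilon> \<le> (1 - (1 - u \<epsilon>) powr \<alpha>) / \<epsilon>"
      using pb(1) e by (intro divide_right_mono) auto
    moreover have "(1 - (1 - u \<epsilon>) powr \<alpha>) / \<epsilon> \<le> \<alpha> * u \<epsilon> / \<epsilon>"
      using pb(2) e by (intro divide_right_mono) auto
    ultimately show ?case unfolding T fx by simp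
  qed
  have lo: "((\<lambda>\<epsilon>. \<alpha> * (u \<epsilon> / \<epsilon>) * (1 - u \<epsilon>) powr (\<alpha> - 1)) \<longlongrightarrow> \<alpha> * D0 p n f x * (1 - 0) powr (\<alpha> - 1)) (at_right 0)"
    by (intro tendsto_intros Du u0) simp
  have hi: "((\<lambda>\<epsilon>. \<alpha> * (u \<epsilon> / \<epsilon>)) \<longlongrightarrow> \<alpha> * D0 p n f x) (at_right 0)"
    by (intro tendsto_intros Du)
  show ?thesis
    by (rule tendsto_sandwich[OF eventually_mono[OF ineq] eventually_mono[OF ineq] lo[simplified] hi]) auto
qed

lemma lim_point0:
  assumes p: "p \<ge> 2" and x: "x \<in> cube p n" and b: "boolf p n f" and fx: "f x = 0" and a: "\<alpha> > 1"
  shows "((\<lambda>\<epsilon>. (f x - noise_op p n \<epsilon> f x powr \<alpha>) / \<epsilon>) \<longlongrightarrow> 0) (at_right 0)"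
proof -
  have ev2: "eventually (\<lambda>\<epsilon>::real. 0 < \<epsilon> \<and> \<epsilon> < 1) (at_right 0)" by (rule ev_small) simp
  have ineq: "eventually (\<lambda>\<epsilon>. - (real n powr \<alpha> * \<epsilon> powr (\<alpha> - 1)) \<le> (f x - noise_op p n \<epsilon> f x powr \<alpha>) / \<epsilon>
      \<and> (f x - noise_op p n \<epsilon> f x powr \<alpha>) / \<epsilon> \<le> 0) (at_right 0)"
    using ev2
  proof eventually_elim
    case (elim \<epsilon>)
    let ?T = "noise_op p n \<epsilon> f x"
    have T0: "0 \<le> ?T" using Tf_bounds(1)[OF p x b, of \<epsilon>] elim fx by simp
    have "?T \<le> 1 - (1 - \<epsilon>) ^ n" using Tf_bounds(2)[OF p x b, of \<epsilon>] elim fx by simp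
    also have "\<dots> \<le> real n * \<epsilon>" using one_minus_pow[of \<epsilon> n] elim by simp
    finally have T1: "?T \<le> real n * \<epsilon>" .
    have "?T powr \<alpha> \<le> (real n * \<epsilon>) powr \<alpha>" by (rule powr_mono2) (use T0 T1 a in auto)
    also have "\<dots> = real n powr \<alpha> * \<epsilon> powr \<alpha>" by (rule powr_mult; use elim in auto)
    finally have A0: "?T powr \<alpha> \<le> real n powr \<alpha> * \<epsilon> powr \<alpha>" .
    have e: "0 < \<epsilon>" using elim by simp
    have "\<epsilon> powr (\<alpha> - 1) = \<epsilon> powr \<alpha> / \<epsilon> powr 1" by (rule powr_diff)
    also have "\<dots> = \<epsilon> powr \<alpha> / \<epsilon>" using e by simp
    finally have pd: "\<epsilon> powr (\<alpha> - 1) = \<epsilon> powr \<alpha> / \<epsilon>" .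
    have A: "?T powr \<alpha> / \<epsilon> \<le> real n powr \<alpha> * \<epsilon> powr (\<alpha> - 1)"
      unfolding pd using divide_right_mono[OF A0, of \<epsilon>] e by simp
    have B: "0 \<le> ?T powr \<alpha> / \<epsilon>" using e by simp
    have C: "(f x - ?T powr \<alpha>) / \<epsilon> = - (?T powr \<alpha> / \<epsilon>)" using fx by simp
    show ?case unfolding C using A B by linarith
  qed
  have e0: "((\<lambda>\<epsilon>::real. \<epsilon>) \<longlongrightarrow> 0) (at_right 0)" by (rule tendsto_ident_at)
  have evnn: "eventually (\<lambda>\<epsilon>::real. 0 \<le> \<epsilon>) (at_right 0)" using ev_pos by (rule eventually_mono) simp
  have pw: "((\<lambda>\<epsilon>. \<epsilon> powr (\<alpha> - 1)) \<longlongrightarrow> 0 powr (\<alpha> - 1)) (at_right 0)"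
    by (rule tendsto_powr'[OF e0 tendsto_const]) (use a evnn in simp)
  have lo: "((\<lambda>\<epsilon>. - (real n powr \<alpha> * \<epsilon> powr (\<alpha> - 1))) \<longlongrightarrow> 0) (at_right 0)"
    using tendsto_minus[OF tendsto_mult[OF tendsto_const pw, of "real n powr \<alpha>"]] by simp
  have ev_lo: "eventually (\<lambda>\<epsilon>. - (real n powr \<alpha> * \<epsilon> powr (\<alpha> - 1)) \<le> (f x - noise_op p n \<epsilon> f x powr \<alpha>) / \<epsilon>) (at_right 0)"
    using ineq by (rule eventually_mono) (rule conjunct1)
  have ev_hi: "eventually (\<lambda>\<epsilon>. (f x - noise_op p n \<epsilon> f x powr \<alpha>) / \<epsilon> \<le> 0) (at_right 0)"
    using ineq by (rule eventually_mono) (rule conjunct2)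
  show ?thesis by (rule tendsto_sandwich[OF ev_lo ev_hi lo tendsto_const])
qed

lemma lim_point:
  assumes p: "p \<ge> 2" and x: "x \<in> cube p n" and b: "boolf p n f" and a: "\<alpha> > 1"
  shows "((\<lambda>\<epsilon>. (f x - noise_op p n \<epsilon> f x powr \<alpha>) / \<epsilon>) \<longlongrightarrow> (if f x = 1 then \<alpha> * D0 p n f x else 0)) (at_right 0)"
proof -
  have "f x \<in> {0, 1}" using b x unfolding boolf_def by blast
  then show ?thesis using lim_point1[OF p x b _ a] lim_point0[OF p x b _ a] by auto
qed

lemma lim_moment:
  assumes p: "p \<ge> 2" and b: "boolf p n f" and a: "\<alpha> > 1"
  shows "((\<lambda>\<epsilon>. (expect p n f - noise_moment p n \<alpha> \<epsilon> f) / \<epsilon>) \<longlongrightarrow>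
           (\<Sum>x\<in>cube p n. if f x = 1 then \<alpha> * D0 p n f x else 0) / real p ^ n) (at_right 0)"
proof -
  have eq: "(expect p n f - noise_moment p n \<alpha> \<epsilon> f) / \<epsilon>
      = (\<Sum>x\<in>cube p n. (f x - noise_op p n \<epsilon> f x powr \<alpha>) / \<epsilon>) / real p ^ n" for \<epsilon>
    unfolding expect_def noise_moment_def
    by (simp add: sum_divide_distrib[symmetric] sum_subtractf diff_divide_distrib mult.commute)
  have l: "((\<lambda>\<epsilon>. \<Sum>x\<in>cube p n. (f x - noise_op p n \<epsilon> f x powr \<alpha>) / \<epsilon>) \<longlongrightarrow>
      (\<Sum>x\<in>cube p n. if f x = 1 then \<alpha> * D0 p n f x else 0)) (at_right 0)"
    by (rule tendsto_sum) (rule lim_point[OF p _ b a])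
  have ne: "real p ^ n \<noteq> 0" using p by simp
  show ?thesis unfolding eq by (rule tendsto_divide[OF l tendsto_const ne])
qed

definition S1 :: "nat \<Rightarrow> nat \<Rightarrow> (nat \<Rightarrow> nat) set" where
  "S1 p n = {z \<in> cube p n. card (supp_vec n z) = 1}"

definition Nf :: "nat \<Rightarrow> nat \<Rightarrow> ((nat \<Rightarrow> nat) \<Rightarrow> real) \<Rightarrow> real" where
  "Nf p n f = (\<Sum>x\<in>cube p n. f x * (\<Sum>z\<in>S1 p n. 1 - f (vadd p n x z)))"

lemma D0_S1: "D0 p n f x = (\<Sum>z\<in>S1 p n. 1 - f (vadd p n x z)) / real (p - 1)"
proof -
  have "D0 p n f x = (\<Sum>z\<in>cube p n. if card (supp_vec n z) = 1 then (1 - f (vadd p n x z)) / real (p - 1) else 0)"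
    unfolding D0_def by (intro sum.cong refl) simp
  also have "\<dots> = (\<Sum>z\<in>S1 p n. (1 - f (vadd p n x z)) / real (p - 1))"
    unfolding S1_def by (rule sum.inter_filter[OF finite_cube, symmetric])
  also have "\<dots> = (\<Sum>z\<in>S1 p n. 1 - f (vadd p n x z)) / real (p - 1)"
    by (rule sum_divide_distrib[symmetric])
  finally show ?thesis .
qed

lemma L_eq:
  assumes b: "boolf p n f"
  shows "(\<Sum>x\<in>cube p n. if f x = 1 then \<alpha> * D0 p n f x else 0) = \<alpha> * Nf p n f / real (p - 1)"
proof -
  have "(\<Sum>x\<in>cube p n. if f x = 1 then \<alpha> * D0 p n f x else 0)
      = (\<Sum>x\<in>cube p n. \<alpha> / real (p - 1) * (f x * (\<Sum>z\<in>S1 p n. 1 - f (vadd p n x z))))"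
  proof (intro sum.cong refl)
    fix x assume "x \<in> cube p n"
    then have "f x \<in> {0, 1}" using b unfolding boolf_def by blast
    then show "(if f x = 1 then \<alpha> * D0 p n f x else 0) = \<alpha> / real (p - 1) * (f x * (\<Sum>z\<in>S1 p n. 1 - f (vadd p n x z)))"
      unfolding D0_S1 by auto
  qed
  also have "\<dots> = \<alpha> / real (p - 1) * Nf p n f" unfolding Nf_def by (rule sum_distrib_left[symmetric])
  finally show ?thesis by simp
qed

definition ev :: "nat \<Rightarrow> nat \<Rightarrow> nat \<Rightarrow> nat" where "ev j a = (\<lambda>i. if i = j then a else 0)"
definition Esh :: "nat \<Rightarrow> nat \<Rightarrow> nat \<Rightarrow> (nat \<Rightarrow> nat) \<Rightarrow> (nat \<Rightarrow> nat)" where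
  "Esh p j a x = x(j := (x j + a) mod p)"

lemma S1_image:
  assumes p: "p > 0"
  shows "S1 p n = (\<lambda>ja. ev (fst ja) (snd ja)) ` ({..<n} \<times> {1..<p})"
proof
  show "(\<lambda>ja. ev (fst ja) (snd ja)) ` ({..<n} \<times> {1..<p}) \<subseteq> S1 p n"
  proof
    fix z assume "z \<in> (\<lambda>ja. ev (fst ja) (snd ja)) ` ({..<n} \<times> {1..<p})"
    then obtain j a where ja: "j < n" "1 \<le> a" "a < p" "z = ev j a" by auto
    have "supp_vec n z = {j}" using ja by (auto simp: supp_vec_def ev_def)
    moreover have "z \<in> cube p n" using ja by (auto simp: cube_def ev_def)
    ultimately show "z \<in> S1 p n" by (simp add: S1_def)
  qed
  show "S1 p n \<subseteq> (\<lambda>ja. ev (fst ja) (snd ja)) ` ({..<n} \<times> {1..<p})"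
  proof
    fix z assume z: "z \<in> S1 p n"
    then obtain j where j: "supp_vec n z = {j}" unfolding S1_def by (auto simp: card_1_singleton_iff)
    then have jn: "j < n" "z j \<noteq> 0" by (auto simp: supp_vec_def)
    have zc: "z \<in> cube p n" using z by (simp add: S1_def)
    have "z = ev j (z j)"
    proof
      fix i show "z i = ev j (z j) i"
      proof (cases "i = j")
        case False
        show ?thesis
        proof (cases "i < n")
          case True then have "i \<notin> supp_vec n z" using j False by auto
          then show ?thesis using True False by (simp add: supp_vec_def ev_def)
        next
          case False then show ?thesis using zc \<open>i \<noteq> j\<close> by (simp add: cube_def ev_def)
        qed
      qed (simp add: ev_def)
    qed
    moreover have "z j < p" using zc jn by (simp add: cube_def)
    ultimately show "z \<in> (\<lambda>ja. ev (fst ja) (snd ja)) ` ({..<n} \<times> {1..<p})"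
      using jn by (intro image_eqI[where x="(j, z j)"]) auto
  qed
qed

lemma S1_inj: "inj_on (\<lambda>ja. ev (fst ja) (snd ja)) ({..<n} \<times> {1..<p})"
proof (rule inj_onI)
  fix u v assume u: "u \<in> {..<n} \<times> {1..<p}" and v: "v \<in> {..<n} \<times> {1..<p}"
    and h: "ev (fst u) (snd u) = ev (fst v) (snd v)"
  have "fst u = fst v"
  proof (rule ccontr)
    assume ne: "fst u \<noteq> fst v"
    have "ev (fst u) (snd u) (fst u) = ev (fst v) (snd v) (fst u)" using h by simp
    then show False using ne u by (auto simp: ev_def)
  qed
  moreover have "snd u = snd v" using fun_cong[OF h, of "fst u"] calculation by (simp add: ev_def)
  ultimately show "u = v" by (simp add: prod_eq_iff)
qed

lemma sum_S1:
  assumes p: "p > 0"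
  shows "(\<Sum>z\<in>S1 p n. g z) = (\<Sum>j<n. \<Sum>a\<in>{1..<p}. g (ev j a))"
  unfolding S1_image[OF p] sum.reindex[OF S1_inj] sum.cartesian_product
  by (rule sum.cong) auto

lemma vadd_ev: "x \<in> cube p n \<Longrightarrow> j < n \<Longrightarrow> vadd p n x (ev j a) = Esh p j a x"
  by (auto simp: vadd_def ev_def Esh_def cube_def)

lemma Esh_cube: "p > 0 \<Longrightarrow> x \<in> cube p n \<Longrightarrow> j < n \<Longrightarrow> Esh p j a x \<in> cube p n"
  by (auto simp: Esh_def cube_def)

lemma Esh_inv: assumes "x \<in> cube p n" "a + b = p" shows "Esh p j b (Esh p j a x) = x"
proof -
  have "((x j + a) mod p + b) mod p = (x j + p) mod p" using assms(2) by (simp add: mod_add_left_eq add.assoc)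
  also have "\<dots> = x j"
  proof (cases "j < n")
    case True then show ?thesis using assms(1) by (simp add: cube_def)
  next
    case False then have "x j = 0" using assms(1) by (simp add: cube_def)
    then show ?thesis by simp
  qed
  finally show ?thesis unfolding Esh_def by auto
qed

lemma ind_bool: "u \<in> {0, 1} \<Longrightarrow> v \<in> {0, 1::real} \<Longrightarrow> (if u \<noteq> v then 1 else 0) = u * (1 - v) + v * (1 - u)"
  by auto

lemma infl_j:
  assumes p: "p \<ge> 2" and b: "boolf p n f" and j: "j < n"
  shows "(\<Sum>x\<in>cube p n. \<Sum>a\<in>{1..<p}. (if f x \<noteq> f (x(j := (x j + a) mod p)) then 1 else 0::real))
       = 2 * (\<Sum>x\<in>cube p n. f x * (\<Sum>a\<in>{1..<p}. 1 - f (Esh p j a x)))"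
proof -
  have p0: "p > 0" using p by simp
  have fb: "f y \<in> {0, 1}" if "y \<in> cube p n" for y using b that unfolding boolf_def by blast
  let ?A = "\<Sum>x\<in>cube p n. \<Sum>a\<in>{1..<p}. f x * (1 - f (Esh p j a x))"
  let ?B = "\<Sum>x\<in>cube p n. \<Sum>a\<in>{1..<p}. f (Esh p j a x) * (1 - f x)"
  have "(\<Sum>x\<in>cube p n. \<Sum>a\<in>{1..<p}. (if f x \<noteq> f (x(j := (x j + a) mod p)) then 1 else 0::real)) = ?A + ?B"
    unfolding sum.distrib[symmetric]
  proof (intro sum.cong refl)
    fix x a assume x: "x \<in> cube p n"
    have e: "Esh p j a x \<in> cube p n" by (rule Esh_cube[OF p0 x j])
    show "(if f x \<noteq> f (x(j := (x j + a) mod p)) then 1 else 0) = f x * (1 - f (Esh p j a x)) + f (Esh p j a x) * (1 - f x)"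
      using ind_bool[OF fb[OF x] fb[OF e]] unfolding Esh_def by simp
  qed
  also have "?B = ?A"
  proof -
    have "?B = (\<Sum>a\<in>{1..<p}. \<Sum>x\<in>cube p n. f (Esh p j a x) * (1 - f x))" by (rule sum.swap)
    also have "\<dots> = (\<Sum>a\<in>{1..<p}. \<Sum>y\<in>cube p n. f y * (1 - f (Esh p j (p - a) y)))"
    proof (rule sum.cong[OF refl])
      fix a assume a: "a \<in> {1..<p}"
      have inv1: "Esh p j (p - a) (Esh p j a y) = y" if "y \<in> cube p n" for y
        using a Esh_inv[OF that, of a "p - a" j] by simp
      have inv2: "Esh p j a (Esh p j (p - a) y) = y" if "y \<in> cube p n" for y
        using a Esh_inv[OF that, of "p - a" a j] by simp
      show "(\<Sum>x\<in>cube p n. f (Esh p j a x) * (1 - f x)) = (\<Sum>y\<in>cube p n. f y * (1 - f (Esh p j (p - a) y)))"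
        by (rule sum.reindex_bij_witness[where i="Esh p j (p - a)" and j="Esh p j a"])
           (auto simp: inv1 inv2 Esh_cube[OF p0 _ j])
    qed
    also have "\<dots> = (\<Sum>a\<in>{1..<p}. \<Sum>y\<in>cube p n. f y * (1 - f (Esh p j a y)))"
      by (rule sum.reindex_bij_witness[where i="\<lambda>a. p - a" and j="\<lambda>a. p - a"]) auto
    also have "\<dots> = ?A" by (rule sum.swap)
    finally show ?thesis .
  qed
  also have "?A + ?A = 2 * (\<Sum>x\<in>cube p n. f x * (\<Sum>a\<in>{1..<p}. 1 - f (Esh p j a x)))"
    by (simp add: sum_distrib_left)
  finally show ?thesis .
qed

lemma influence_Nf:
  assumes p: "p \<ge> 2" and b: "boolf p n f"
  shows "total_influence p n f = 2 * Nf p n f / (real p ^ n * real (p - 1))"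
proof -
  have p0: "p > 0" using p by simp
  have "total_influence p n f = (\<Sum>j<n. 2 * (\<Sum>x\<in>cube p n. f x * (\<Sum>a\<in>{1..<p}. 1 - f (Esh p j a x)))) / (real p ^ n * real (p - 1))"
    unfolding total_influence_def influence_def sum_divide_distrib[symmetric]
    by (intro arg_cong2[where f="(/)"] sum.cong refl) (simp only: infl_j[OF p b] lessThan_iff)
  also have "(\<Sum>j<n. 2 * (\<Sum>x\<in>cube p n. f x * (\<Sum>a\<in>{1..<p}. 1 - f (Esh p j a x)))) = 2 * Nf p n f"
  proof -
    have "(\<Sum>j<n. (\<Sum>x\<in>cube p n. f x * (\<Sum>a\<in>{1..<p}. 1 - f (Esh p j a x))))
        = (\<Sum>x\<in>cube p n. f x * (\<Sum>j<n. \<Sum>a\<in>{1..<p}. 1 - f (Esh p j a x)))"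
      by (subst sum.swap) (simp add: sum_distrib_left)
    also have "\<dots> = Nf p n f"
      unfolding Nf_def by (intro sum.cong refl) (simp add: sum_S1[OF p0] vadd_ev)
    finally show ?thesis by (simp add: sum_distrib_left[symmetric])
  qed
  finally show ?thesis .
qed

lemma powr_between:
  fixes a b t g :: real
  assumes "0 < a" "a \<le> t" "t \<le> b"
  shows "min (a powr g) (b powr g) \<le> t powr g \<and> t powr g \<le> max (a powr g) (b powr g)"
proof (cases "g \<ge> 0")
  case True
  have "a powr g \<le> t powr g" using assms True by (intro powr_mono2) auto
  moreover have "t powr g \<le> b powr g" using assms True by (intro powr_mono2) auto
  ultimately show ?thesis by simp
next
  case False
  have "t powr g \<le> a powr g" using assms False by (intro powr_mono2') auto
  moreover have "b powr g \<le> t powr g" using assms False by (intro powr_mono2') auto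
  ultimately show ?thesis by simp
qed

lemma taylor_powr:
  fixes y m \<alpha> :: real
  assumes y: "0 < y" and m: "0 < m"
  shows "\<exists>t. min y m \<le> t \<and> t \<le> max y m \<and>
     y powr \<alpha> = m powr \<alpha> + \<alpha> * m powr (\<alpha> - 1) * (y - m) + \<alpha> * (\<alpha> - 1) / 2 * t powr (\<alpha> - 2) * (y - m)\<^sup>2"
proof (cases "y = m")
  case True then show ?thesis by (intro exI[of _ m]) simp
next
  case False
  define diff where "diff k t = (if k = 0 then t powr \<alpha> else if k = 1 then \<alpha> * t powr (\<alpha> - 1)
      else \<alpha> * (\<alpha> - 1) * t powr (\<alpha> - 2))" for k :: nat and t :: real
  have der: "\<forall>k t. k < 2 \<and> min y m \<le> t \<and> t \<le> max y m \<longrightarrow> DERIV (diff k) t :> diff (Suc k) t"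
  proof (intro allI impI)
    fix k :: nat and t :: real assume h: "k < 2 \<and> min y m \<le> t \<and> t \<le> max y m"
    then have t0: "0 < t" using y m by (auto simp: min_def split: if_splits)
    show "DERIV (diff k) t :> diff (Suc k) t"
    proof (cases "k = 0")
      case True
      show ?thesis unfolding True diff_def using has_real_derivative_powr[OF t0, of \<alpha>] by simp
    next
      case False
      then have k: "k = 1" using h by simp
      have "DERIV (\<lambda>t. \<alpha> * t powr (\<alpha> - 1)) t :> \<alpha> * ((\<alpha> - 1) * t powr (\<alpha> - 1 - 1))"
        by (intro DERIV_cmult has_real_derivative_powr t0)
      moreover have "\<alpha> - 1 - 1 = \<alpha> - 2" by simp
      ultimately show ?thesis unfolding k diff_def by (simp add: mult.assoc)
    qed
  qed
  obtain t where t: "(if y < m then y < t \<and> t < m else m < t \<and> t < y)"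
    "diff 0 y = (\<Sum>k<2. diff k m / fact k * (y - m) ^ k) + diff 2 t / fact 2 * (y - m) ^ 2"
    using Taylor[of 2 diff "diff 0" "min y m" "max y m" m y, OF _ refl der] False by auto
  have "min y m \<le> t \<and> t \<le> max y m" using t(1) by (auto split: if_splits)
  moreover have "y powr \<alpha> = m powr \<alpha> + \<alpha> * m powr (\<alpha> - 1) * (y - m) + \<alpha> * (\<alpha> - 1) / 2 * t powr (\<alpha> - 2) * (y - m)\<^sup>2"
    using t(2) by (simp add: diff_def numeral_2_eq_2)
  ultimately show ?thesis by blast
qed

lemma taylor_bounds:
  fixes y m \<alpha> :: real
  assumes y: "0 < y" and m: "0 < m" and a: "\<alpha> > 1"
  shows "\<alpha> * (\<alpha> - 1) / 2 * min (y powr (\<alpha> - 2)) (m powr (\<alpha> - 2)) * (y - m)\<^sup>2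
           \<le> y powr \<alpha> - m powr \<alpha> - \<alpha> * m powr (\<alpha> - 1) * (y - m)
       \<and> y powr \<alpha> - m powr \<alpha> - \<alpha> * m powr (\<alpha> - 1) * (y - m)
           \<le> \<alpha> * (\<alpha> - 1) / 2 * max (y powr (\<alpha> - 2)) (m powr (\<alpha> - 2)) * (y - m)\<^sup>2"
proof -
  obtain t where t: "min y m \<le> t" "t \<le> max y m"
    "y powr \<alpha> = m powr \<alpha> + \<alpha> * m powr (\<alpha> - 1) * (y - m) + \<alpha> * (\<alpha> - 1) / 2 * t powr (\<alpha> - 2) * (y - m)\<^sup>2"
    using taylor_powr[OF y m] by blast
  have mm: "0 < min y m" using y m by simp
  have pb: "min (min y m powr (\<alpha> - 2)) (max y m powr (\<alpha> - 2)) \<le> t powr (\<alpha> - 2)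
     \<and> t powr (\<alpha> - 2) \<le> max (min y m powr (\<alpha> - 2)) (max y m powr (\<alpha> - 2))"
    by (rule powr_between[OF mm t(1,2)])
  have e1: "min (min y m powr (\<alpha> - 2)) (max y m powr (\<alpha> - 2)) = min (y powr (\<alpha> - 2)) (m powr (\<alpha> - 2))"
    by (cases "y \<le> m") (auto simp: min_def max_def)
  have e2: "max (min y m powr (\<alpha> - 2)) (max y m powr (\<alpha> - 2)) = max (y powr (\<alpha> - 2)) (m powr (\<alpha> - 2))"
    by (cases "y \<le> m") (auto simp: min_def max_def)
  have c: "0 \<le> \<alpha> * (\<alpha> - 1) / 2 * (y - m)\<^sup>2" using a by simp
  have "\<alpha> * (\<alpha> - 1) / 2 * (y - m)\<^sup>2 * min (y powr (\<alpha> - 2)) (m powr (\<alpha> - 2)) \<le> \<alpha> * (\<alpha> - 1) / 2 * (y - m)\<^sup>2 * t powr (\<alpha> - 2)"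
    using pb e1 c by (intro mult_left_mono) auto
  moreover have "\<alpha> * (\<alpha> - 1) / 2 * (y - m)\<^sup>2 * t powr (\<alpha> - 2) \<le> \<alpha> * (\<alpha> - 1) / 2 * (y - m)\<^sup>2 * max (y powr (\<alpha> - 2)) (m powr (\<alpha> - 2))"
    using pb e2 c by (intro mult_left_mono) auto
  ultimately show ?thesis unfolding t(3) by (simp add: mult_ac)
qed

definition epsr :: "nat \<Rightarrow> real \<Rightarrow> real" where "epsr p r = (1 - r) * real (p - 1) / real p"

lemma rho_epsr: assumes "p \<ge> 2" shows "rho p (epsr p r) = r"
proof -
  have a: "real p \<noteq> 0" and b: "real (p - 1) \<noteq> 0" using assms by auto
  show ?thesis unfolding rho_def epsr_def using a b by (simp add: field_simps)
qed

lemma chi_zero: "chi p n (\<lambda>_. 0) x = 1"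
  by (simp add: chi_def ep_def)

lemma supp_zero: "card (supp_vec n (\<lambda>_. 0)) = 0"
  by (simp add: supp_vec_def)

lemma fourier_zero: "fourier p n f (\<lambda>_. 0) = complex_of_real (expect p n f)"
  unfolding fourier_def expect_def by (simp add: ep_def)

definition Af :: "nat \<Rightarrow> nat \<Rightarrow> ((nat \<Rightarrow> nat) \<Rightarrow> real) \<Rightarrow> (nat \<Rightarrow> nat) \<Rightarrow> complex" where
  "Af p n f x = (\<Sum>\<xi>\<in>S1 p n. fourier p n f \<xi> * chi p n \<xi> x)"

lemma eigen_split:
  assumes p: "p \<ge> 2"
  shows "complex_of_real (noise_op p n \<epsilon> f x) = complex_of_real (expect p n f)
     + (\<Sum>\<xi>\<in>cube p n - {\<lambda>_. 0}. of_real (rho p \<epsilon> ^ card (supp_vec n \<xi>)) * fourier p n f \<xi> * chi p n \<xi> x)"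
proof -
  have z: "(\<lambda>_. 0) \<in> cube p n" using p by (simp add: zero_cube)
  show ?thesis unfolding eigen[OF p] sum.remove[OF finite_cube z]
    by (simp add: chi_zero supp_zero fourier_zero)
qed

lemma S1_filter: "S1 p n = {\<xi> \<in> cube p n - {\<lambda>_. 0}. card (supp_vec n \<xi>) = 1}"
  unfolding S1_def using supp_zero[of n] by auto

lemma limAc:
  assumes p: "p \<ge> 2"
  shows "((\<lambda>r. complex_of_real ((noise_op p n (epsr p r) f x - expect p n f) / r)) \<longlongrightarrow> Af p n f x) (at_right 0)"
proof -
  let ?C = "cube p n - {\<lambda>_. 0}"
  have ev: "eventually (\<lambda>r. (\<Sum>\<xi>\<in>?C. of_real (r ^ (card (supp_vec n \<xi>) - 1)) * fourier p n f \<xi> * chi p n \<xi> x)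
      = complex_of_real ((noise_op p n (epsr p r) f x - expect p n f) / r)) (at_right 0)"
    using ev_pos
  proof (rule eventually_mono)
    fix r :: real assume r: "0 < r"
    have "complex_of_real ((noise_op p n (epsr p r) f x - expect p n f) / r)
        = (complex_of_real (noise_op p n (epsr p r) f x) - complex_of_real (expect p n f)) / of_real r"
      by simp
    also have "\<dots> = (\<Sum>\<xi>\<in>?C. of_real (r ^ card (supp_vec n \<xi>)) * fourier p n f \<xi> * chi p n \<xi> x) / of_real r"
      unfolding eigen_split[OF p] rho_epsr[OF p] by simp
    also have "\<dots> = (\<Sum>\<xi>\<in>?C. of_real (r ^ (card (supp_vec n \<xi>) - 1)) * fourier p n f \<xi> * chi p n \<xi> x)"
      unfolding sum_divide_distrib
    proof (intro sum.cong refl)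
      fix \<xi> assume xi: "\<xi> \<in> ?C"
      then obtain j where j: "card (supp_vec n \<xi>) = Suc j" using supp_pos[of \<xi> p n]
        by (cases "card (supp_vec n \<xi>)") auto
      show "of_real (r ^ card (supp_vec n \<xi>)) * fourier p n f \<xi> * chi p n \<xi> x / of_real r
          = of_real (r ^ (card (supp_vec n \<xi>) - 1)) * fourier p n f \<xi> * chi p n \<xi> x"
        unfolding j using r by simp
    qed
    finally show "(\<Sum>\<xi>\<in>?C. of_real (r ^ (card (supp_vec n \<xi>) - 1)) * fourier p n f \<xi> * chi p n \<xi> x)
      = complex_of_real ((noise_op p n (epsr p r) f x - expect p n f) / r)" by simp
  qed
  have lim: "((\<lambda>r. \<Sum>\<xi>\<in>?C. of_real (r ^ (card (supp_vec n \<xi>) - 1)) * fourier p n f \<xi> * chi p n \<xi> x)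
      \<longlongrightarrow> (\<Sum>\<xi>\<in>?C. of_real (0 ^ (card (supp_vec n \<xi>) - 1)) * fourier p n f \<xi> * chi p n \<xi> x)) (at_right (0::real))"
    by (intro tendsto_intros)
  have val: "(\<Sum>\<xi>\<in>?C. of_real (0 ^ (card (supp_vec n \<xi>) - 1)) * fourier p n f \<xi> * chi p n \<xi> x) = Af p n f x"
  proof -
    have "(\<Sum>\<xi>\<in>?C. of_real (0 ^ (card (supp_vec n \<xi>) - 1)) * fourier p n f \<xi> * chi p n \<xi> x)
        = (\<Sum>\<xi>\<in>?C. if card (supp_vec n \<xi>) = 1 then fourier p n f \<xi> * chi p n \<xi> x else 0)"
    proof (intro sum.cong refl)
      fix \<xi> assume xi: "\<xi> \<in> ?C"
      then have "card (supp_vec n \<xi>) \<ge> 1" using supp_pos[of \<xi> p n] by auto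
      then show "of_real (0 ^ (card (supp_vec n \<xi>) - 1)) * fourier p n f \<xi> * chi p n \<xi> x
          = (if card (supp_vec n \<xi>) = 1 then fourier p n f \<xi> * chi p n \<xi> x else 0)" by auto
    qed
    also have "\<dots> = Af p n f x" unfolding Af_def S1_filter
      by (rule sum.inter_filter[symmetric]) (simp add: finite_cube)
    finally show ?thesis .
  qed
  show ?thesis using Lim_transform_eventually[OF lim[unfolded val] ev] .
qed

lemma limA:
  assumes p: "p \<ge> 2"
  shows "((\<lambda>r. (noise_op p n (epsr p r) f x - expect p n f) / r) \<longlongrightarrow> Re (Af p n f x)) (at_right 0)"
    and "Im (Af p n f x) = 0"
proof -
  show "((\<lambda>r. (noise_op p n (epsr p r) f x - expect p n f) / r) \<longlongrightarrow> Re (Af p n f x)) (at_right 0)"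
    using tendsto_Re[OF limAc[OF p]] by simp
  have "((\<lambda>r. 0) \<longlongrightarrow> Im (Af p n f x)) (at_right (0::real))"
    using tendsto_Im[OF limAc[OF p, of n f x]] by simp
  then show "Im (Af p n f x) = 0"
    using tendsto_unique[OF _ _ tendsto_const] by (metis trivial_limit_at_right_real)
qed

lemma sum_chi: "p > 0 \<Longrightarrow> \<xi> \<in> cube p n \<Longrightarrow> (\<Sum>x\<in>cube p n. chi p n \<xi> x) = (if \<xi> = (\<lambda>_. 0) then of_nat p ^ n else 0)"
  using orth[of p \<xi> n "\<lambda>_. 0"] zero_cube[of p n] by (simp add: chi_zero)

lemma sumA2:
  assumes p: "p \<ge> 2"
  shows "(\<Sum>x\<in>cube p n. (Re (Af p n f x))\<^sup>2) = real p ^ n * W1 p n f"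
proof -
  have p0: "p > 0" using p by simp
  have S1c: "S1 p n \<subseteq> cube p n" by (auto simp: S1_def)
  have fS: "finite (S1 p n)" using finite_subset[OF S1c finite_cube] .
  have "complex_of_real (\<Sum>x\<in>cube p n. (Re (Af p n f x))\<^sup>2) = (\<Sum>x\<in>cube p n. complex_of_real ((cmod (Af p n f x))\<^sup>2))"
    by (simp add: cmod_power2 limA(2)[OF p])
  also have "\<dots> = (\<Sum>x\<in>cube p n. Af p n f x * cnj (Af p n f x))"
    by (intro sum.cong refl) (rule complex_norm_square)
  also have "\<dots> = (\<Sum>x\<in>cube p n. \<Sum>\<eta>\<in>S1 p n. \<Sum>\<xi>\<in>S1 p n.
       fourier p n f \<xi> * cnj (fourier p n f \<eta>) * (chi p n \<xi> x * cnj (chi p n \<eta> x)))"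
    unfolding Af_def cnj_sum sum_distrib_right sum_distrib_left
    by (intro sum.cong refl) (simp add: mult_ac)
  also have "\<dots> = (\<Sum>\<eta>\<in>S1 p n. \<Sum>\<xi>\<in>S1 p n. \<Sum>x\<in>cube p n.
       fourier p n f \<xi> * cnj (fourier p n f \<eta>) * (chi p n \<xi> x * cnj (chi p n \<eta> x)))"
    by (subst sum.swap, rule sum.cong[OF refl], rule sum.swap)
  also have "\<dots> = (\<Sum>\<eta>\<in>S1 p n. \<Sum>\<xi>\<in>S1 p n.
       fourier p n f \<xi> * cnj (fourier p n f \<eta>) * (\<Sum>x\<in>cube p n. chi p n \<xi> x * cnj (chi p n \<eta> x)))"
    by (simp add: sum_distrib_left)
  also have "\<dots> = (\<Sum>\<eta>\<in>S1 p n. \<Sum>\<xi>\<in>S1 p n.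
       (if \<xi> = \<eta> then fourier p n f \<xi> * cnj (fourier p n f \<xi>) * of_nat p ^ n else 0))"
  proof (intro sum.cong refl)
    fix \<eta> \<xi> assume h: "\<eta> \<in> S1 p n" "\<xi> \<in> S1 p n"
    then have c: "\<eta> \<in> cube p n" "\<xi> \<in> cube p n" using S1c by auto
    show "fourier p n f \<xi> * cnj (fourier p n f \<eta>) * (\<Sum>x\<in>cube p n. chi p n \<xi> x * cnj (chi p n \<eta> x))
      = (if \<xi> = \<eta> then fourier p n f \<xi> * cnj (fourier p n f \<xi>) * of_nat p ^ n else 0)"
      unfolding orth[OF p0 c(2) c(1)] by simp
  qed
  also have "\<dots> = (\<Sum>\<xi>\<in>S1 p n. fourier p n f \<xi> * cnj (fourier p n f \<xi>) * of_nat p ^ n)"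
    using fS by (simp add: sum.delta)
  also have "\<dots> = complex_of_real (real p ^ n * W1 p n f)"
    unfolding W1_def S1_def[symmetric]
    by (simp add: complex_norm_square[symmetric] sum_distrib_left mult_ac)
  finally show ?thesis using of_real_eq_iff by blast
qed

lemma sumT:
  assumes p: "p \<ge> 2"
  shows "(\<Sum>x\<in>cube p n. noise_op p n \<epsilon> f x) = (\<Sum>x\<in>cube p n. f x)"
proof -
  have p0: "p > 0" using p by simp
  have z: "(\<lambda>_. 0) \<in> cube p n" using p0 by (simp add: zero_cube)
  have "complex_of_real (\<Sum>x\<in>cube p n. noise_op p n \<epsilon> f x)
      = (\<Sum>x\<in>cube p n. \<Sum>\<xi>\<in>cube p n. of_real (rho p \<epsilon> ^ card (supp_vec n \<xi>)) * fourier p n f \<xi> * chi p n \<xi> x)"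
    by (simp add: eigen[OF p])
  also have "\<dots> = (\<Sum>\<xi>\<in>cube p n. of_real (rho p \<epsilon> ^ card (supp_vec n \<xi>)) * fourier p n f \<xi> * (\<Sum>x\<in>cube p n. chi p n \<xi> x))"
    by (subst sum.swap) (simp add: sum_distrib_left)
  also have "\<dots> = (\<Sum>\<xi>\<in>cube p n. if \<xi> = (\<lambda>_. 0) then fourier p n f \<xi> * of_nat p ^ n else 0)"
    by (intro sum.cong refl) (auto simp: sum_chi[OF p0] supp_zero)
  also have "\<dots> = complex_of_real (expect p n f) * of_nat p ^ n"
    using z by (simp add: sum.delta' finite_cube fourier_zero)
  also have "\<dots> = complex_of_real (\<Sum>x\<in>cube p n. f x)"
    using p0 by (simp add: expect_def)
  finally show ?thesis using of_real_eq_iff by blast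
qed

lemma lim2:
  assumes p: "p \<ge> 2" and a: "\<alpha> > 1" and m0: "0 < expect p n f"
  shows "((\<lambda>r. (noise_moment p n \<alpha> (epsr p r) f - expect p n f powr \<alpha>) / r\<^sup>2) \<longlongrightarrow>
            \<alpha> * (\<alpha> - 1) / 2 * expect p n f powr (\<alpha> - 2) * W1 p n f) (at_right 0)"
proof -
  define m where "m = expect p n f"
  define c where "c = \<alpha> * (\<alpha> - 1) / 2"
  define T where "T r x = noise_op p n (epsr p r) f x" for r x
  define q where "q r x = (T r x - m) / r" for r x
  define tm where "tm r x = (T r x powr \<alpha> - m powr \<alpha> - \<alpha> * m powr (\<alpha> - 1) * (T r x - m)) / r\<^sup>2" for r x
  define A where "A x = Re (Af p n f x)" for x
  have mpos: "0 < m" using m0 by (simp add: m_def)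
  have qlim: "((\<lambda>r. q r x) \<longlongrightarrow> A x) (at_right 0)" for x
    unfolding q_def T_def m_def A_def by (rule limA(1)[OF p])
  have Tlim: "((\<lambda>r. T r x) \<longlongrightarrow> m) (at_right 0)" for x
  proof -
    have l: "((\<lambda>r. m + r * q r x) \<longlongrightarrow> m + 0 * A x) (at_right 0)"
      by (intro tendsto_intros qlim)
    have "eventually (\<lambda>r. m + r * q r x = T r x) (at_right 0)"
      using ev_pos by (rule eventually_mono) (simp add: q_def)
    from Lim_transform_eventually[OF l this] show ?thesis by simp
  qed
  have tmlim: "((\<lambda>r. tm r x) \<longlongrightarrow> c * m powr (\<alpha> - 2) * (A x)\<^sup>2) (at_right 0)" for x
  proof -
    have evT: "eventually (\<lambda>r. 0 < T r x) (at_right 0)" using order_tendstoD(1)[OF Tlim mpos] .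
    have ineq: "eventually (\<lambda>r. c * min (T r x powr (\<alpha> - 2)) (m powr (\<alpha> - 2)) * (q r x)\<^sup>2 \<le> tm r x
        \<and> tm r x \<le> c * max (T r x powr (\<alpha> - 2)) (m powr (\<alpha> - 2)) * (q r x)\<^sup>2) (at_right 0)"
      using evT ev_pos
    proof eventually_elim
      case (elim r)
      have tb: "c * min (T r x powr (\<alpha> - 2)) (m powr (\<alpha> - 2)) * (T r x - m)\<^sup>2
           \<le> T r x powr \<alpha> - m powr \<alpha> - \<alpha> * m powr (\<alpha> - 1) * (T r x - m)
         \<and> T r x powr \<alpha> - m powr \<alpha> - \<alpha> * m powr (\<alpha> - 1) * (T r x - m)
           \<le> c * max (T r x powr (\<alpha> - 2)) (m powr (\<alpha> - 2)) * (T r x - m)\<^sup>2"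
        unfolding c_def by (rule taylor_bounds[OF elim(1) mpos a])
      have r2: "0 < r\<^sup>2" using elim(2) by simp
      have qq: "(q r x)\<^sup>2 = (T r x - m)\<^sup>2 / r\<^sup>2" unfolding q_def by (simp add: power_divide)
      have "c * min (T r x powr (\<alpha> - 2)) (m powr (\<alpha> - 2)) * (T r x - m)\<^sup>2 / r\<^sup>2 \<le> tm r x"
        unfolding tm_def using tb r2 by (intro divide_right_mono) auto
      moreover have "tm r x \<le> c * max (T r x powr (\<alpha> - 2)) (m powr (\<alpha> - 2)) * (T r x - m)\<^sup>2 / r\<^sup>2"
        unfolding tm_def using tb r2 by (intro divide_right_mono) auto
      ultimately show ?case unfolding qq by simp
    qed
    have pw: "((\<lambda>r. T r x powr (\<alpha> - 2)) \<longlongrightarrow> m powr (\<alpha> - 2)) (at_right 0)"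
      using mpos by (intro tendsto_powr' Tlim tendsto_const) simp
    have lo: "((\<lambda>r. c * min (T r x powr (\<alpha> - 2)) (m powr (\<alpha> - 2)) * (q r x)\<^sup>2) \<longlongrightarrow>
        c * min (m powr (\<alpha> - 2)) (m powr (\<alpha> - 2)) * (A x)\<^sup>2) (at_right 0)"
      by (intro tendsto_intros pw qlim)
    have hi: "((\<lambda>r. c * max (T r x powr (\<alpha> - 2)) (m powr (\<alpha> - 2)) * (q r x)\<^sup>2) \<longlongrightarrow>
        c * max (m powr (\<alpha> - 2)) (m powr (\<alpha> - 2)) * (A x)\<^sup>2) (at_right 0)"
      by (intro tendsto_intros pw qlim)
    have ev_lo: "eventually (\<lambda>r. c * min (T r x powr (\<alpha> - 2)) (m powr (\<alpha> - 2)) * (q r x)\<^sup>2 \<le> tm r x) (at_right 0)"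
      using ineq by (rule eventually_mono) (rule conjunct1)
    have ev_hi: "eventually (\<lambda>r. tm r x \<le> c * max (T r x powr (\<alpha> - 2)) (m powr (\<alpha> - 2)) * (q r x)\<^sup>2) (at_right 0)"
      using ineq by (rule eventually_mono) (rule conjunct2)
    show ?thesis using tendsto_sandwich[OF ev_lo ev_hi lo[simplified] hi[simplified]] .
  qed
  have sumT': "(\<Sum>x\<in>cube p n. T r x) = real p ^ n * m" for r
    unfolding T_def m_def sumT[OF p] expect_def using p by simp
  have card: "real (card (cube p n)) = real p ^ n" by (simp add: card_cube)
  have eq: "(noise_moment p n \<alpha> (epsr p r) f - m powr \<alpha>) / r\<^sup>2 = (\<Sum>x\<in>cube p n. tm r x) / real p ^ n" for r
  proof -
    have "(\<Sum>x\<in>cube p n. tm r x)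
        = ((\<Sum>x\<in>cube p n. T r x powr \<alpha>) - real p ^ n * m powr \<alpha> - \<alpha> * m powr (\<alpha> - 1) * ((\<Sum>x\<in>cube p n. T r x) - real p ^ n * m)) / r\<^sup>2"
      unfolding tm_def sum_divide_distrib[symmetric] sum_subtractf sum_distrib_left[symmetric]
      by (simp add: card right_diff_distrib)
    also have "\<dots> = ((\<Sum>x\<in>cube p n. T r x powr \<alpha>) - real p ^ n * m powr \<alpha>) / r\<^sup>2" by (simp add: sumT')
    finally have s: "(\<Sum>x\<in>cube p n. tm r x) = ((\<Sum>x\<in>cube p n. T r x powr \<alpha>) - real p ^ n * m powr \<alpha>) / r\<^sup>2" .
    have pn: "real p ^ n \<noteq> 0" using p by simp
    show ?thesis unfolding s noise_moment_def expect_def T_def using pn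
      by (simp add: field_simps)
  qed
  have lsum: "((\<lambda>r. (\<Sum>x\<in>cube p n. tm r x) / real p ^ n) \<longlongrightarrow> (\<Sum>x\<in>cube p n. c * m powr (\<alpha> - 2) * (A x)\<^sup>2) / real p ^ n) (at_right 0)"
    using p by (intro tendsto_intros tmlim) simp
  have val: "(\<Sum>x\<in>cube p n. c * m powr (\<alpha> - 2) * (A x)\<^sup>2) / real p ^ n = c * m powr (\<alpha> - 2) * W1 p n f"
    using p unfolding sum_distrib_left[symmetric] A_def sumA2[OF p] by simp
  have "((\<lambda>r. (noise_moment p n \<alpha> (epsr p r) f - m powr \<alpha>) / r\<^sup>2) \<longlongrightarrow> c * m powr (\<alpha> - 2) * W1 p n f) (at_right 0)"
    using lsum unfolding eq[symmetric] val .
  then show ?thesis by (simp add: c_def m_def)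
qed

lemma boolfuns_boolf: "f \<in> boolfuns p n m \<Longrightarrow> boolf p n f"
  by (simp add: boolfuns_def boolf_def)

lemma boolfuns_expect: "f \<in> boolfuns p n m \<Longrightarrow> expect p n f = m"
  by (simp add: boolfuns_def)

lemma finite_boolfuns: "finite (boolfuns p n m)"
proof (rule inj_on_finite[where f="\<lambda>f. {x\<in>cube p n. f x = 1}" and B="Pow (cube p n)"])
  show "inj_on (\<lambda>f. {x\<in>cube p n. f x = 1}) (boolfuns p n m)"
  proof (rule inj_onI)
    fix f g assume f: "f \<in> boolfuns p n m" and g: "g \<in> boolfuns p n m"
      and h: "{x\<in>cube p n. f x = 1} = {x\<in>cube p n. g x = 1}"
    show "f = g"
    proof
      fix x show "f x = g x"
      proof (cases "x \<in> cube p n")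
        case True
        then have "f x \<in> {0, 1}" "g x \<in> {0, 1}" using f g by (auto simp: boolfuns_def)
        moreover have "f x = 1 \<longleftrightarrow> g x = 1" using h True by blast
        ultimately show ?thesis by auto
      next
        case False then show ?thesis using f g by (simp add: boolfuns_def)
      qed
    qed
  qed
qed (auto simp: finite_cube)

lemma boolfuns_nonempty:
  assumes p: "p \<ge> 2" and j: "j \<le> p ^ n"
  shows "boolfuns p n (real j / real p ^ n) \<noteq> {}"
proof -
  obtain S where S: "S \<subseteq> cube p n" "card S = j" "finite S"
    using obtain_subset_with_card_n[of j "cube p n"] j by (auto simp: card_cube)
  define f where "f x = (if x \<in> S then 1 else 0::real)" for x
  have "(\<Sum>x\<in>cube p n. f x) = real (card S)"
    unfolding f_def using S(1) finite_cube[of p n]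
    by (simp add: sum.If_cases Int_absorb1)
  then have "f \<in> boolfuns p n (real j / real p ^ n)"
    using S unfolding boolfuns_def expect_def f_def by auto
  then show ?thesis by auto
qed

lemma Lval:
  assumes p: "p \<ge> 2" and b: "boolf p n f"
  shows "(\<Sum>x\<in>cube p n. if f x = 1 then \<alpha> * D0 p n f x else 0) / real p ^ n = \<alpha> / 2 * total_influence p n f"
proof -
  have a: "real (p - 1) > 0" "real p ^ n > 0" using p by auto
  show ?thesis unfolding L_eq[OF b] influence_Nf[OF p b] using a by (simp add: field_simps)
qed

lemma part1:
  assumes p: "p \<ge> 2" and a: "\<alpha> > 1" and ne: "boolfuns p n m \<noteq> {}"
  shows "\<exists>\<epsilon>0>0. \<epsilon>0 \<le> 1 - 1 / real p \<and>
           (\<forall>\<epsilon>. 0 < \<epsilon> \<and> \<epsilon> < \<epsilon>0 \<longrightarrow>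
              (\<forall>f\<in>boolfuns p n m.
                 (\<forall>g\<in>boolfuns p n m. noise_moment p n \<alpha> \<epsilon> g \<le> noise_moment p n \<alpha> \<epsilon> f) \<longrightarrow>
                 total_influence p n f = Min (total_influence p n ` boolfuns p n m)))"
proof -
  let ?B = "boolfuns p n m"
  let ?I = "total_influence p n"
  have fB: "finite ?B" by (rule finite_boolfuns)
  have "Min (?I ` ?B) \<in> ?I ` ?B" using fB ne by (intro Min_in) auto
  then obtain g0 where g0: "g0 \<in> ?B" "?I g0 = Min (?I ` ?B)" by (metis imageE)
  define Bad where "Bad = {f \<in> ?B. ?I f > ?I g0}"
  have fBad: "finite Bad" using fB unfolding Bad_def by simp
  have limB: "((\<lambda>\<epsilon>. (m - noise_moment p n \<alpha> \<epsilon> f) / \<epsilon>) \<longlongrightarrow> \<alpha> / 2 * ?I f) (at_right 0)" if "f \<in> ?B" for f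
    using lim_moment[OF p boolfuns_boolf[OF that] a] unfolding Lval[OF p boolfuns_boolf[OF that]]
      boolfuns_expect[OF that] .
  have "\<forall>f\<in>Bad. eventually (\<lambda>\<epsilon>. noise_moment p n \<alpha> \<epsilon> f < noise_moment p n \<alpha> \<epsilon> g0) (at_right 0)"
  proof
    fix f assume f: "f \<in> Bad"
    then have fB': "f \<in> ?B" and lt: "?I f > ?I g0" by (auto simp: Bad_def)
    have l: "((\<lambda>\<epsilon>. (m - noise_moment p n \<alpha> \<epsilon> f) / \<epsilon> - (m - noise_moment p n \<alpha> \<epsilon> g0) / \<epsilon>)
        \<longlongrightarrow> \<alpha> / 2 * ?I f - \<alpha> / 2 * ?I g0) (at_right 0)"
      by (intro tendsto_diff limB fB' g0(1))
    have "\<alpha> / 2 * ?I f - \<alpha> / 2 * ?I g0 > 0" using lt a by (simp add: algebra_simps)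
    from order_tendstoD(1)[OF l this] ev_pos
    show "eventually (\<lambda>\<epsilon>. noise_moment p n \<alpha> \<epsilon> f < noise_moment p n \<alpha> \<epsilon> g0) (at_right 0)"
    proof eventually_elim
      case (elim \<epsilon>)
      then have "(noise_moment p n \<alpha> \<epsilon> g0 - noise_moment p n \<alpha> \<epsilon> f) / \<epsilon> > 0"
        by (simp add: diff_divide_distrib)
      then show ?case using elim(2) by (simp add: zero_less_divide_iff)
    qed
  qed
  from eventually_ball_finite[OF fBad this]
  obtain b where b: "b > 0" "\<And>\<epsilon>. 0 < \<epsilon> \<Longrightarrow> \<epsilon> < b \<Longrightarrow> \<forall>f\<in>Bad. noise_moment p n \<alpha> \<epsilon> f < noise_moment p n \<alpha> \<epsilon> g0"
    unfolding eventually_at_right_field by auto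
  define \<epsilon>0 where "\<epsilon>0 = min b (1 - 1 / real p)"
  have pp: "1 - 1 / real p > 0" using p by (simp add: field_simps)
  show ?thesis
  proof (intro exI[of _ \<epsilon>0] conjI allI impI ballI)
    show "\<epsilon>0 > 0" using b pp by (simp add: \<epsilon>0_def)
    show "\<epsilon>0 \<le> 1 - 1 / real p" by (simp add: \<epsilon>0_def)
    fix \<epsilon> f assume e: "0 < \<epsilon> \<and> \<epsilon> < \<epsilon>0" and f: "f \<in> ?B"
      and mx: "\<forall>g\<in>?B. noise_moment p n \<alpha> \<epsilon> g \<le> noise_moment p n \<alpha> \<epsilon> f"
    have le: "?I g0 \<le> ?I f" unfolding g0(2) using fB f by (intro Min_le) auto
    show "?I f = Min (?I ` ?B)"
    proof (rule ccontr)
      assume "?I f \<noteq> Min (?I ` ?B)"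
      then have "f \<in> Bad" using le g0(2) f by (auto simp: Bad_def)
      moreover have "0 < \<epsilon>" "\<epsilon> < b" using e by (auto simp: \<epsilon>0_def)
      ultimately have "noise_moment p n \<alpha> \<epsilon> f < noise_moment p n \<alpha> \<epsilon> g0" using b(2) by blast
      with mx g0(1) show False by fastforce
    qed
  qed
qed

lemma rp: "p \<ge> 2 \<Longrightarrow> real (p - 1) = real p - 1" by (simp add: of_nat_diff)

lemma epsr_rho: assumes p: "p \<ge> 2" shows "epsr p (rho p \<epsilon>) = \<epsilon>"
  using p unfolding epsr_def rho_def rp[OF p] by (simp add: field_simps)

lemma rho_pos: assumes p: "p \<ge> 2" and e: "\<epsilon> < 1 - 1 / real p" shows "0 < rho p \<epsilon>"
proof -
  have q: "real p \<ge> 2" using p by simp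
  have "\<epsilon> * real p < real p - 1" using e q by (simp add: field_simps)
  then show ?thesis unfolding rho_def rp[OF p] using q by (simp add: field_simps)
qed

lemma rho_lt: assumes p: "p \<ge> 2" and e: "epsr p r0 < \<epsilon>" shows "rho p \<epsilon> < r0"
proof -
  have q: "real p \<ge> 2" using p by simp
  have "(1 - r0) * (real p - 1) < \<epsilon> * real p" using e q unfolding epsr_def rp[OF p] by (simp add: field_simps)
  then show ?thesis unfolding rho_def rp[OF p] using q by (simp add: field_simps)
qed

lemma epsr_bounds: assumes p: "p \<ge> 2" and r: "0 < r0" "r0 \<le> 1"
  shows "0 \<le> epsr p r0" "epsr p r0 < 1 - 1 / real p"
proof -
  have q: "real p \<ge> 2" using p by simp
  show "0 \<le> epsr p r0" unfolding epsr_def rp[OF p] using q r by simp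
  have "r0 * (real p - 1) > 0" using q r by simp
  moreover have "(1 - r0) * (real p - 1) = (real p - 1) - r0 * (real p - 1)" by (simp add: algebra_simps)
  ultimately have "(1 - r0) * (real p - 1) < real p - 1" by linarith
  then have "(1 - r0) * (real p - 1) / real p < (real p - 1) / real p"
    using q by (intro divide_strict_right_mono) auto
  moreover have "(real p - 1) / real p = 1 - 1 / real p" using q by (simp add: diff_divide_distrib)
  ultimately show "epsr p r0 < 1 - 1 / real p" unfolding epsr_def rp[OF p] by simp
qed

lemma part2_main:
  assumes p: "p \<ge> 2" and a: "\<alpha> > 1" and ne: "boolfuns p n m \<noteq> {}" and m: "0 < m"
  shows "\<exists>\<epsilon>1. 0 \<le> \<epsilon>1 \<and> \<epsilon>1 < 1 - 1 / real p \<and>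
           (\<forall>\<epsilon>. \<epsilon>1 < \<epsilon> \<and> \<epsilon> < 1 - 1 / real p \<longrightarrow>
              (\<forall>f\<in>boolfuns p n m.
                 (\<forall>g\<in>boolfuns p n m. noise_moment p n \<alpha> \<epsilon> g \<le> noise_moment p n \<alpha> \<epsilon> f) \<longrightarrow>
                 W1 p n f = Max (W1 p n ` boolfuns p n m)))"
proof -
  let ?B = "boolfuns p n m"
  let ?W = "W1 p n"
  let ?M = "\<lambda>r f. noise_moment p n \<alpha> (epsr p r) f"
  have fB: "finite ?B" by (rule finite_boolfuns)
  have "Max (?W ` ?B) \<in> ?W ` ?B" using fB ne by (intro Max_in) auto
  then obtain g0 where g0: "g0 \<in> ?B" "?W g0 = Max (?W ` ?B)" by (metis imageE)
  define Bad where "Bad = {f \<in> ?B. ?W f < ?W g0}"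
  have fBad: "finite Bad" using fB unfolding Bad_def by simp
  define C where "C = \<alpha> * (\<alpha> - 1) / 2 * m powr (\<alpha> - 2)"
  have C: "C > 0" unfolding C_def using a m by simp
  have limB: "((\<lambda>r. (?M r f - m powr \<alpha>) / r\<^sup>2) \<longlongrightarrow> C * ?W f) (at_right 0)" if "f \<in> ?B" for f
    using lim2[OF p a, of n f] boolfuns_expect[OF that] m unfolding C_def by simp
  have "\<forall>f\<in>Bad. eventually (\<lambda>r. ?M r f < ?M r g0) (at_right 0)"
  proof
    fix f assume f: "f \<in> Bad"
    then have fB': "f \<in> ?B" and lt: "?W f < ?W g0" by (auto simp: Bad_def)
    have l: "((\<lambda>r. (?M r g0 - m powr \<alpha>) / r\<^sup>2 - (?M r f - m powr \<alpha>) / r\<^sup>2) \<longlongrightarrow> C * ?W g0 - C * ?W f) (at_right 0)"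
      by (intro tendsto_diff limB fB' g0(1))
    have "C * ?W g0 - C * ?W f > 0" using lt C by (simp add: algebra_simps)
    from order_tendstoD(1)[OF l this] ev_pos
    show "eventually (\<lambda>r. ?M r f < ?M r g0) (at_right 0)"
    proof eventually_elim
      case (elim r)
      then have "(?M r g0 - ?M r f) / r\<^sup>2 > 0" by (simp add: diff_divide_distrib)
      then show ?case using elim(2) by (simp add: zero_less_divide_iff)
    qed
  qed
  from eventually_ball_finite[OF fBad this]
  obtain b where b: "b > 0" "\<And>r. 0 < r \<Longrightarrow> r < b \<Longrightarrow> \<forall>f\<in>Bad. ?M r f < ?M r g0"
    unfolding eventually_at_right_field by auto
  define r0 where "r0 = min b 1"
  have r0: "0 < r0" "r0 \<le> 1" "r0 \<le> b" using b by (auto simp: r0_def)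
  show ?thesis
  proof (intro exI[of _ "epsr p r0"] conjI allI impI ballI)
    show "0 \<le> epsr p r0" "epsr p r0 < 1 - 1 / real p" using epsr_bounds[OF p r0(1,2)] by auto
    fix \<epsilon> f assume e: "epsr p r0 < \<epsilon> \<and> \<epsilon> < 1 - 1 / real p" and f: "f \<in> ?B"
      and mx: "\<forall>g\<in>?B. noise_moment p n \<alpha> \<epsilon> g \<le> noise_moment p n \<alpha> \<epsilon> f"
    define r where "r = rho p \<epsilon>"
    have "rho p \<epsilon> < r0" by (rule rho_lt[OF p]) (use e in simp)
    moreover have "0 < rho p \<epsilon>" by (rule rho_pos[OF p]) (use e in simp)
    ultimately have r: "0 < r" "r < b" using r0 unfolding r_def by auto
    have er: "epsr p r = \<epsilon>" unfolding r_def by (rule epsr_rho[OF p])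
    have le: "?W f \<le> ?W g0" unfolding g0(2) using fB f by (intro Max_ge) auto
    show "?W f = Max (?W ` ?B)"
    proof (rule ccontr)
      assume "?W f \<noteq> Max (?W ` ?B)"
      then have "f \<in> Bad" using le g0(2) f by (auto simp: Bad_def)
      then have "?M r f < ?M r g0" using b(2)[OF r] by blast
      with mx g0(1) er show False by fastforce
    qed
  qed
qed

lemma part2_triv:
  assumes "\<forall>f\<in>boolfuns p n m. \<forall>g\<in>boolfuns p n m. f = g" and p: "p \<ge> 2"
  shows "\<exists>\<epsilon>1. 0 \<le> \<epsilon>1 \<and> \<epsilon>1 < 1 - 1 / real p \<and>
           (\<forall>\<epsilon>. \<epsilon>1 < \<epsilon> \<and> \<epsilon> < 1 - 1 / real p \<longrightarrow>
              (\<forall>f\<in>boolfuns p n m.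
                 (\<forall>g\<in>boolfuns p n m. noise_moment p n \<alpha> \<epsilon> g \<le> noise_moment p n \<alpha> \<epsilon> f) \<longrightarrow>
                 W1 p n f = Max (W1 p n ` boolfuns p n m)))"
proof (intro exI[of _ 0] conjI allI impI ballI)
  show "(0::real) \<le> 0" by simp
  show "0 < 1 - 1 / real p" using p by (simp add: field_simps)
  fix \<epsilon> f assume f: "f \<in> boolfuns p n m"
  then have "boolfuns p n m = {f}" using assms(1) by blast
  then show "W1 p n f = Max (W1 p n ` boolfuns p n m)" by simp
qed

lemma unique_extreme:
  assumes p: "p \<ge> 2" and m: "m \<le> 0 \<or> m \<ge> 1"
  shows "\<forall>f\<in>boolfuns p n m. \<forall>g\<in>boolfuns p n m. f = g"
proof -
  have pn: "real p ^ n > 0" using p by simp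
  have const: "\<exists>c. \<forall>x\<in>cube p n. f x = c" if f: "f \<in> boolfuns p n m" for f
  proof -
    have fb0: "f x \<in> {0, 1}" if "x \<in> cube p n" for x using f that by (auto simp: boolfuns_def)
    have fb: "0 \<le> f x" "f x \<le> 1" if "x \<in> cube p n" for x using fb0[OF that] by auto
    have s: "(\<Sum>x\<in>cube p n. f x) = m * real p ^ n" using f pn by (simp add: boolfuns_def expect_def field_simps)
    show ?thesis
    proof (cases "m \<le> 0")
      case True
      have "(\<Sum>x\<in>cube p n. f x) \<le> 0" using s True pn by (simp add: mult_nonpos_nonneg)
      moreover have "0 \<le> (\<Sum>x\<in>cube p n. f x)" using fb by (intro sum_nonneg) auto
      ultimately have "(\<Sum>x\<in>cube p n. f x) = 0" by simp
      then have "\<forall>x\<in>cube p n. f x = 0" using fb by (subst (asm) sum_nonneg_eq_0_iff) (auto simp: finite_cube)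
      then show ?thesis by blast
    next
      case False
      then have m1: "m \<ge> 1" using m by simp
      have "(\<Sum>x\<in>cube p n. 1 - f x) = real p ^ n - m * real p ^ n"
        using s by (simp add: sum_subtractf card_cube)
      also have "\<dots> \<le> 0" using m1 pn by (simp add: algebra_simps)
      finally have "(\<Sum>x\<in>cube p n. 1 - f x) \<le> 0" .
      moreover have "0 \<le> (\<Sum>x\<in>cube p n. 1 - f x)" using fb by (intro sum_nonneg) auto
      ultimately have "(\<Sum>x\<in>cube p n. 1 - f x) = 0" by simp
      then have "\<forall>x\<in>cube p n. 1 - f x = 0" using fb by (subst (asm) sum_nonneg_eq_0_iff) (auto simp: finite_cube)
      then show ?thesis by auto
    qed
  qed
  show ?thesis
  proof (intro ballI)
    fix f g assume f: "f \<in> boolfuns p n m" and g: "g \<in> boolfuns p n m"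
    obtain c where c: "\<forall>x\<in>cube p n. f x = c" using const[OF f] by blast
    obtain d where d: "\<forall>x\<in>cube p n. g x = d" using const[OF g] by blast
    have z: "(\<lambda>_. 0) \<in> cube p n" using p by (simp add: zero_cube)
    have ef: "expect p n f = c" and eg: "expect p n g = d"
      using c d pn by (simp_all add: expect_def card_cube)
    have "c = d" using ef eg f g by (simp add: boolfuns_def)
    show "f = g"
    proof
      fix x show "f x = g x"
        using c d \<open>c = d\<close> f g by (cases "x \<in> cube p n") (auto simp: boolfuns_def)
    qed
  qed
qed

theorem theorem4:
  fixes p n j :: nat and \<alpha> :: real
  assumes "p \<ge> 2" and "n \<ge> 1" and "\<alpha> > 1" and "j \<le> p ^ n"
  defines "m \<equiv> real j / real p ^ n"
  shows "(\<exists>\<epsilon>0>0. \<epsilon>0 \<le> 1 - 1 / real p \<and>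
           (\<forall>\<epsilon>. 0 < \<epsilon> \<and> \<epsilon> < \<epsilon>0 \<longrightarrow>
              (\<forall>f\<in>boolfuns p n m.
                 (\<forall>g\<in>boolfuns p n m. noise_moment p n \<alpha> \<epsilon> g \<le> noise_moment p n \<alpha> \<epsilon> f) \<longrightarrow>
                 total_influence p n f = Min (total_influence p n ` boolfuns p n m))))
       \<and> (\<exists>\<epsilon>1. 0 \<le> \<epsilon>1 \<and> \<epsilon>1 < 1 - 1 / real p \<and>
           (\<forall>\<epsilon>. \<epsilon>1 < \<epsilon> \<and> \<epsilon> < 1 - 1 / real p \<longrightarrow>
              (\<forall>f\<in>boolfuns p n m.
                 (\<forall>g\<in>boolfuns p n m. noise_moment p n \<alpha> \<epsilon> g \<le> noise_moment p n \<alpha> \<epsilon> f) \<longrightarrow>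
                 W1 p n f = Max (W1 p n ` boolfuns p n m))))"
  proof -
  have p: "p \<ge> 2" and a: "\<alpha> > 1" using assms by auto
  have ne: "boolfuns p n m \<noteq> {}" unfolding m_def by (rule boolfuns_nonempty[OF p assms(4)])
  show ?thesis
  proof
    show "\<exists>\<epsilon>0>0. \<epsilon>0 \<le> 1 - 1 / real p \<and>
           (\<forall>\<epsilon>. 0 < \<epsilon> \<and> \<epsilon> < \<epsilon>0 \<longrightarrow>
              (\<forall>f\<in>boolfuns p n m.
                 (\<forall>g\<in>boolfuns p n m. noise_moment p n \<alpha> \<epsilon> g \<le> noise_moment p n \<alpha> \<epsilon> f) \<longrightarrow>
                 total_influence p n f = Min (total_influence p n ` boolfuns p n m)))"
      by (rule part1[OF p a ne])
    show "\<exists>\<epsilon>1. 0 \<le> \<epsilon>1 \<and> \<epsilon>1 < 1 - 1 / real p \<and>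
           (\<forall>\<epsilon>. \<epsilon>1 < \<epsilon> \<and> \<epsilon> < 1 - 1 / real p \<longrightarrow>
              (\<forall>f\<in>boolfuns p n m.
                 (\<forall>g\<in>boolfuns p n m. noise_moment p n \<alpha> \<epsilon> g \<le> noise_moment p n \<alpha> \<epsilon> f) \<longrightarrow>
                 W1 p n f = Max (W1 p n ` boolfuns p n m)))"
    proof (cases "m > 0")
      case True then show ?thesis by (rule part2_main[OF p a ne])
    next
      case False
      then have "m \<le> 0 \<or> m \<ge> 1" by simp
      from part2_triv[OF unique_extreme[OF p this] p] show ?thesis .
    qed
  qed
qed

end
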